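(* For every $\tilde{\mathbb N}$-composition $\alpha$, $$M_\alpha=\sum_{\beta\preceq\alpha}(-1)^{\ell(\beta)-\ell(\alpha)}c_{\alpha,\beta}F_\beta,$$ where, writing $\alpha=(\varepsilon^{i_1},\alpha_1,\dots,\varepsilon^{i_k},\alpha_k,\varepsilon^{i_{k+1}})$ and $\beta=(\varepsilon^{j_1},\beta_1,\dots,\varepsilon^{j_k},\beta_k,\varepsilon^{j_{k+1}})$ compatibly as in the definition of $\preceq$, $c_{\alpha,\beta}=\binom{i_1}{j_1}\cdots\binom{i_k}{j_k}\binom{i_{k+1}-1}{j_{k+1}-1}$ with $\binom{-1}{-1}=1$.
   Context: $\tilde{\mathbb N}=\mathbb N\cup\{\varepsilon\}$ with $0+\varepsilon=\varepsilon+\varepsilon=\varepsilon$ and $n+\varepsilon=n$ for integers $n\ge1$. $\mathbf{k}$ is a commutative ring containing $\mathbb Q$, and $\mathbf{k}[[X]]_{\tilde{\mathbb N}}$, $X=\{x_1<x_2<\cdots\}$, is the algebra of possibly infinite linear combinations of formal monomials $\prod x_i^{f(x_i)}$ with $f$ finitely supported $\tilde{\mathbb N}$-valued, multiplied by adding exponents in $\tilde{\mathbb N}$. An $\tilde{\mathbb N}$-composition is a finite sequence of elements of $\{\varepsilon,1,2,\dots\}$, $\ell$ its length, $\varepsilon^i$ denotes $i$ consecutive entries $\varepsilon$. $M_\alpha=\sum_{1\le i_1<\cdots<i_k}x_{i_1}^{\alpha_1}\cdots x_{i_k}^{\alpha_k}$. For compositions $\sigma,\tau$ of positive integers with the same sum,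 $\sigma\preceq\tau$ means $\mathrm{set}(\tau)\subseteq\mathrm{set}(\sigma)$, $\mathrm{set}((s_1,\dots,s_m))=\{s_1,s_1+s_2,\dots,s_1+\cdots+s_{m-1}\}$. For $\tilde{\mathbb N}$-compositions, $\gamma\preceq\delta$ means they can be written $\gamma=(\varepsilon^{i_1},\gamma_1,\dots,\varepsilon^{i_k},\gamma_k,\varepsilon^{i_{k+1}})$, $\delta=(\varepsilon^{j_1},\delta_1,\dots,\varepsilon^{j_k},\delta_k,\varepsilon^{j_{k+1}})$ with $i_p,j_p\ge0$, either $i_{k+1}=j_{k+1}=0$ or both $\ge1$, $\gamma_l,\delta_l$ nonempty compositions of positive integers with $|\gamma_l|=|\delta_l|$, $\gamma_l\preceq\delta_l$, and $i_p\le j_p$ for all $p$. For $\alpha=(\varepsilon^{i_1},s_1,\dots,\varepsilon^{i_k},s_k,\varepsilon^{i_{k+1}})$ with $s_j$ positive integers, $a_j=i_1+s_1+\cdots+i_j+s_j$, $\mathrm{set}(\alpha)=\{a_1,\dots,a_k\}$, $N=a_k+i_{k+1}$, $a_0=0$, and $F_\alpha=\sum x_{n_1}^{e_1}\cdots x_{n_N}^{e_N}$ over $1\le n_1\le\cdots\le n_N$ with $n_\ell<n_{\ell+1}$ for $\ell\in\mathrm{set}(\alpha)$, $\ell<N$, where $e_m=\varepsilon$ if $a_{j-1}<m\le a_{j-1}+i_j$ for some $j\le k$ or $m>a_k$, and $e_m=1$ otherwise. *)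

theory Defs
  imports Main
begin

text \<open>Exponents: the monoid N-tilde extended by the exponent 0 (absence of a variable).
  Eps is epsilon, Num n is the integer n (Num 0 = exponent zero).\<close>
datatype ntil = Eps | Num nat

fun tadd :: "ntil \<Rightarrow> ntil \<Rightarrow> ntil" where
  "tadd Eps Eps = Eps"
| "tadd (Num 0) Eps = Eps"
| "tadd Eps (Num 0) = Eps"
| "tadd (Num n) Eps = Num n"
| "tadd Eps (Num n) = Num n"
| "tadd (Num a) (Num b) = Num (a + b)"

text \<open>Monomials are functions from variable indices (x_i with i >= 1) to exponents,
  Num 0 meaning the variable is absent.  The monomial x_{n_1}^{e_1} ... x_{n_N}^{e_N}: \<close>
definition mono_of :: "(nat \<times> ntil) list \<Rightarrow> (nat \<Rightarrow> ntil)" where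
  "mono_of xs = foldr (\<lambda>(n, e) m. m(n := tadd (m n) e)) xs (\<lambda>_. Num 0)"

text \<open>Elements of k[[X]] are given by their coefficient functions on monomials.
  The sum of the monomials f t over t in T has coefficient (number of t with f t = m) at m.\<close>
definition series_of :: "'b set \<Rightarrow> ('b \<Rightarrow> (nat \<Rightarrow> ntil)) \<Rightarrow> (nat \<Rightarrow> ntil) \<Rightarrow> 'k::comm_ring_1" where
  "series_of T f m = of_nat (card {t \<in> T. f t = m})"

definition ncomp :: "ntil list \<Rightarrow> bool" where
  "ncomp \<alpha> \<longleftrightarrow> (\<forall>a \<in> set \<alpha>. a \<noteq> Num 0)"

definition M_fun :: "ntil list \<Rightarrow> (nat \<Rightarrow> ntil) \<Rightarrow> 'k::comm_ring_1" where
  "M_fun \<alpha> = series_of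
     {t :: nat list. length t = length \<alpha> \<and> sorted_wrt (<) t \<and> (\<forall>x \<in> set t. 1 \<le> x)}
     (\<lambda>t. mono_of (zip t \<alpha>))"

text \<open>Expansion of alpha into the exponent sequence e_1..e_N, each paired with a flag telling
  whether its position lies in set(alpha) (i.e. a strict inequality follows).\<close>
fun expand_entry :: "ntil \<Rightarrow> (ntil \<times> bool) list" where
  "expand_entry Eps = [(Eps, False)]"
| "expand_entry (Num s) = replicate (s - 1) (Num 1, False) @ [(Num 1, True)]"

definition expand :: "ntil list \<Rightarrow> (ntil \<times> bool) list" where
  "expand \<alpha> = concat (map expand_entry \<alpha>)"

definition F_fun :: "ntil list \<Rightarrow> (nat \<Rightarrow> ntil) \<Rightarrow> 'k::comm_ring_1" where
  "F_fun \<alpha> = series_of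
     {n :: nat list. length n = length (expand \<alpha>) \<and> sorted n \<and> (\<forall>x \<in> set n. 1 \<le> x) \<and>
        (\<forall>l. Suc l < length n \<and> snd (expand \<alpha> ! l) \<longrightarrow> n ! l < n ! Suc l)}
     (\<lambda>n. mono_of (zip n (map fst (expand \<alpha>))))"

definition cset :: "nat list \<Rightarrow> nat set" where
  "cset \<sigma> = {sum_list (take i \<sigma>) | i. 0 < i \<and> i < length \<sigma>}"

definition comp_le :: "nat list \<Rightarrow> nat list \<Rightarrow> bool" where
  "comp_le \<sigma> \<tau> \<longleftrightarrow> sum_list \<sigma> = sum_list \<tau> \<and> cset \<tau> \<subseteq> cset \<sigma>"

text \<open>(eps^{i_1}, g_1, ..., eps^{i_k}, g_k, eps^{e}) from blocks [(i_1,g_1),...,(i_k,g_k)] and e.\<close>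
definition assemble :: "(nat \<times> nat list) list \<Rightarrow> nat \<Rightarrow> ntil list" where
  "assemble bs e = concat (map (\<lambda>(i, g). replicate i Eps @ map Num g) bs) @ replicate e Eps"

definition compat_dec :: "ntil list \<Rightarrow> ntil list \<Rightarrow> (nat \<times> nat list) list \<Rightarrow> nat
    \<Rightarrow> (nat \<times> nat list) list \<Rightarrow> nat \<Rightarrow> bool" where
  "compat_dec \<gamma> \<delta> bs e cs f \<longleftrightarrow>
     \<gamma> = assemble bs e \<and> \<delta> = assemble cs f \<and> length bs = length cs \<and>
     ((e = 0 \<and> f = 0) \<or> (1 \<le> e \<and> 1 \<le> f)) \<and> e \<le> f \<and>
     (\<forall>p < length bs. fst (bs ! p) \<le> fst (cs ! p) \<and>
        snd (bs ! p) \<noteq> [] \<and> snd (cs ! p) \<noteq> [] \<and>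
        (\<forall>x \<in> set (snd (bs ! p)). 0 < x) \<and> (\<forall>x \<in> set (snd (cs ! p)). 0 < x) \<and>
        comp_le (snd (bs ! p)) (snd (cs ! p)))"

definition tprec :: "ntil list \<Rightarrow> ntil list \<Rightarrow> bool" where
  "tprec \<gamma> \<delta> \<longleftrightarrow> (\<exists>bs e cs f. compat_dec \<gamma> \<delta> bs e cs f)"

text \<open>c_{alpha,beta}, computed from compatible decompositions (beta \<preceq> alpha);
  binom(-1,-1) = 1 corresponds to the case of empty final eps-runs.\<close>
definition ccoef :: "ntil list \<Rightarrow> ntil list \<Rightarrow> nat" where
  "ccoef \<alpha> \<beta> = (SOME v. \<exists>bs e cs f. compat_dec \<beta> \<alpha> bs e cs f \<and>
      v = (\<Prod>p < length cs. fst (cs ! p) choose fst (bs ! p)) *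
          (if f = 0 then 1 else (f - 1) choose (e - 1)))"

end

theory Submission
  imports Defs
begin


lemma tadd_0L[simp]: "tadd (Num 0) x = x" by (cases x) auto
lemma tadd_0R[simp]: "tadd x (Num 0) = x" by (cases x) auto
lemma tadd_EpsR: "tadd x Eps = (if x = Num 0 then Eps else x)"
proof (cases x)
  case (Num n) then show ?thesis by (cases n) auto
qed auto
lemma tadd_EpsL: "tadd Eps x = (if x = Num 0 then Eps else x)"
proof (cases x)
  case (Num n) then show ?thesis by (cases n) auto
qed auto
lemma tadd_eq_0[simp]: "tadd x y = Num 0 \<longleftrightarrow> x = Num 0 \<and> y = Num 0"
  by (cases "(x,y)" rule: tadd.cases) auto

definition tsum :: "ntil list \<Rightarrow> ntil" where
  "tsum es = foldr (\<lambda>e acc. tadd acc e) es (Num 0)"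

lemma tsum_Nil[simp]: "tsum [] = Num 0" by (simp add: tsum_def)
lemma tsum_Cons[simp]: "tsum (e # es) = tadd (tsum es) e" by (simp add: tsum_def)

lemma tsum_rep_Eps: "0 < k \<Longrightarrow> tsum (replicate k Eps) = Eps"
proof (induction k)
  case (Suc k) then show ?case by (cases k) (auto simp: tadd_EpsR)
qed auto
lemma tsum_rep_Num1[simp]: "tsum (replicate k (Num 1)) = Num k"
  by (induction k) auto
lemma tsum_rep_Num1'[simp]: "tsum (replicate k (Num (Suc 0))) = Num k"
  by (induction k) auto
lemma tsum_Eps_prefix: "tsum z = Num c \<Longrightarrow> 0 < c \<Longrightarrow> tsum (replicate r Eps @ z) = Num c"
  by (induction r) (auto simp: tadd_EpsR)
lemma tsum_rep_Eps_app_ne: "0 < k \<Longrightarrow> tsum (replicate k Eps @ z) \<noteq> Num 0"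
  by (induction k) (auto simp: tadd_EpsR)

fun seg :: "(ntil \<times> bool) list \<Rightarrow> ntil list \<Rightarrow> nat" where
  "seg xs [] = (if xs = [] then 1 else 0)"
| "seg xs (c # w) = (\<Sum>k\<in>{1..length xs}. if (\<forall>l<k-1. \<not> snd (xs!l)) \<and> tsum (map fst (take k xs)) = c
       then seg (drop k xs) w else 0)"

declare seg.simps[simp del]

lemma sum_single_nat:
  assumes "\<And>k. k \<in> A \<Longrightarrow> k \<noteq> kk \<Longrightarrow> f k = 0" "finite A"
  shows "sum f A = (if kk \<in> A then f kk else 0)"
proof -
  have "sum f A = sum (\<lambda>k. if k = kk then f kk else 0) A"
    using assms(1) by (intro sum.cong) auto
  then show ?thesis using assms(2) by (simp add: sum.delta)
qed

lemma all_not_less_nat[simp]: "(\<forall>l. \<not> l < (n::nat)) \<longleftrightarrow> n = 0" by auto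

lemma seg_allT: "seg (map (\<lambda>x. (x,True)) a) w = (if w = a then 1 else 0)"
proof (induction w arbitrary: a)
  case Nil then show ?case by (simp add: seg.simps)
next
  case (Cons c w)
  have "seg (map (\<lambda>x. (x,True)) a) (c # w) =
     (if 1 \<in> {1..length a} then (if tsum (map fst (take 1 (map (\<lambda>x. (x,True)) a))) = c
       then seg (drop 1 (map (\<lambda>x. (x,True)) a)) w else 0) else 0)"
    unfolding seg.simps by (subst sum_single_nat[where kk=1]) auto
  then show ?case using Cons by (cases a) (auto simp: drop_map)
qed

lemma seg_Nil_left: "seg [] w = (if w = [] then 1 else 0)"
  by (cases w) (auto simp: seg.simps)

lemma seg_Nil_right: "seg xs [] = (if xs = [] then 1 else 0)"
  by (simp add: seg.simps)

lemma sum_take_Nil: "(\<Sum>u\<le>length w. seg [] (take u w) * f u) = f 0"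
proof -
  have "(\<Sum>u\<le>length w. seg [] (take u w) * f u) = (\<Sum>u\<le>length w. if u = 0 then f 0 else 0)"
    by (intro sum.cong) (auto simp: seg_Nil_left)
  then show ?thesis by (simp add: sum.delta)
qed

lemma seg_append:
  assumes "xs \<noteq> []" "snd (last xs)"
  shows "seg (xs @ ys) w = (\<Sum>u\<le>length w. seg xs (take u w) * seg ys (drop u w))"
  using assms
proof (induction w arbitrary: xs)
  case Nil then show ?case by (simp add: seg.simps)
next
  case (Cons c w)
  define C where "C k \<longleftrightarrow> (\<forall>l<k-1. \<not> snd (xs!l)) \<and> tsum (map fst (take k xs)) = c" for k
  have lastflag: "snd (xs ! (length xs - 1))" using Cons.prems by (simp add: last_conv_nth)
  have "seg (xs @ ys) (c # w) = (\<Sum>k\<in>{1..length xs + length ys}. if (\<forall>l<k-1. \<not> snd ((xs@ys)!l)) \<and> tsum (map fst (take k (xs@ys))) = c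
       then seg (drop k (xs@ys)) w else 0)" by (simp add: seg.simps)
  also have "\<dots> = (\<Sum>k\<in>{1..length xs}. if C k then seg (drop k xs @ ys) w else 0)"
  proof (rule sum.mono_neutral_cong_right)
    show "\<forall>i\<in>{1..length xs + length ys} - {1..length xs}. (if (\<forall>l<i-1. \<not> snd ((xs@ys)!l)) \<and> tsum (map fst (take i (xs@ys))) = c
       then seg (drop i (xs@ys)) w else 0) = 0"
    proof
      fix i assume i: "i \<in> {1..length xs + length ys} - {1..length xs}"
      have "0 < length xs" using Cons.prems by simp
      moreover have "length xs < i" using i by auto
      ultimately have "length xs - 1 < i - 1" by arith
      moreover have "snd ((xs@ys) ! (length xs - 1))" using lastflag Cons.prems
        by (simp add: nth_append)
      ultimately show "(if (\<forall>l<i-1. \<not> snd ((xs@ys)!l)) \<and> tsum (map fst (take i (xs@ys))) = c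
       then seg (drop i (xs@ys)) w else 0) = 0" by auto
    qed
    show "\<And>x. x \<in> {1..length xs} \<Longrightarrow> (if (\<forall>l<x-1. \<not> snd ((xs@ys)!l)) \<and> tsum (map fst (take x (xs@ys))) = c
       then seg (drop x (xs@ys)) w else 0) = (if C x then seg (drop x xs @ ys) w else 0)"
      by (auto simp: C_def nth_append)
  qed auto
  also have "\<dots> = (\<Sum>k\<in>{1..length xs}. if C k then (\<Sum>u\<le>length w. seg (drop k xs) (take u w) * seg ys (drop u w)) else 0)"
  proof (intro sum.cong refl)
    fix k assume k: "k \<in> {1..length xs}"
    show "(if C k then seg (drop k xs @ ys) w else 0) = (if C k then (\<Sum>u\<le>length w. seg (drop k xs) (take u w) * seg ys (drop u w)) else 0)"
    proof (cases "k = length xs")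
      case True then show ?thesis by (simp add: sum_take_Nil)
    next
      case False
      then have "drop k xs \<noteq> []" "snd (last (drop k xs))" using k Cons.prems by auto
      then show ?thesis using Cons.IH by simp
    qed
  qed
  also have "\<dots> = (\<Sum>u\<le>length w. (\<Sum>k\<in>{1..length xs}. if C k then seg (drop k xs) (take u w) else 0) * seg ys (drop u w))"
  proof -
    have "(\<Sum>k\<in>{1..length xs}. if C k then (\<Sum>u\<le>length w. seg (drop k xs) (take u w) * seg ys (drop u w)) else 0)
      = (\<Sum>k\<in>{1..length xs}. \<Sum>u\<le>length w. (if C k then seg (drop k xs) (take u w) else 0) * seg ys (drop u w))"
      by (intro sum.cong) auto
    also have "\<dots> = (\<Sum>u\<le>length w. \<Sum>k\<in>{1..length xs}. (if C k then seg (drop k xs) (take u w) else 0) * seg ys (drop u w))"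
      by (rule sum.swap)
    finally show ?thesis by (simp add: sum_distrib_right)
  qed
  also have "\<dots> = (\<Sum>u\<le>length w. seg xs (c # take u w) * seg ys (drop u w))"
    by (simp add: seg.simps C_def)
  also have "\<dots> = (\<Sum>u\<le>length (c#w). seg xs (take u (c#w)) * seg ys (drop u (c#w)))"
    by (simp only: length_Cons sum.atMost_Suc_shift take_Suc_Cons drop_Suc_Cons take_0 seg_Nil_right)
      (use Cons.prems in simp)
  finally show ?case .
qed

lemma sum_rev_shift: "(\<Sum>k\<in>{1..e::nat}. g (e - k)) = (\<Sum>r<e. (g r :: 'a::comm_monoid_add))"
proof (induction e arbitrary: g)
  case (Suc e)
  have "{1..Suc e} = insert (Suc e) {1..e}" by auto
  then have "(\<Sum>k\<in>{1..Suc e}. g (Suc e - k)) = g 0 + (\<Sum>k\<in>{1..e}. g (Suc e - k))" by simp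
  also have "(\<Sum>k\<in>{1..e}. g (Suc e - k)) = (\<Sum>k\<in>{1..e}. g (Suc (e - k)))"
    by (intro sum.cong) (auto simp: Suc_diff_le)
  also have "\<dots> = (\<Sum>r<e. g (Suc r))" using Suc.IH[of "\<lambda>r. g (Suc r)"] by simp
  finally show ?case by (simp only: sum.lessThan_Suc_shift)
qed simp

lemma sum_choose_below: "(\<Sum>r<j. r choose b) = j choose Suc b"
  by (induction j) auto

lemma sum_split_shift: "(\<Sum>k\<in>{1..r+(n::nat)}. f k) = (\<Sum>k\<in>{1..r}. f k) + (\<Sum>k\<in>{1..n}. (f (r+k) :: 'a::comm_monoid_add))"
proof (induction n)
  case (Suc n)
  have "{1..r + Suc n} = insert (Suc (r+n)) {1..r+n}" "{1..Suc n} = insert (Suc n) {1..n}" by auto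
  then show ?case using Suc by (simp add: ac_simps)
qed simp

abbreviation ep :: "nat \<Rightarrow> (ntil \<times> bool) list" where "ep r \<equiv> replicate r (Eps, False)"

lemma map_fst_ep[simp]: "map fst (ep r) = replicate r Eps" by simp

lemma seg_ep_shift:
  assumes y: "y \<noteq> []" "map fst y = replicate (length y) (Num 1)"
    and v: "v = [] \<or> hd v \<noteq> Eps"
  shows "seg (ep r @ y) v = seg y v"
proof (cases v)
  case Nil then show ?thesis using y by (simp add: seg.simps)
next
  case (Cons c v')
  then have c: "c \<noteq> Eps" using v by simp
  have tk: "tsum (map fst (take k y)) = Num k" if "k \<le> length y" for k
  proof -
    have "map fst (take k y) = take k (map fst y)" by (simp add: take_map)
    also have "\<dots> = replicate k (Num 1)" using y(2) that by simp
    finally show ?thesis by (simp add: tsum_rep_Num1)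
  qed
  have "seg (ep r @ y) (c # v') = (\<Sum>k\<in>{1..r + length y}. if (\<forall>l<k-1. \<not> snd ((ep r @ y)!l)) \<and> tsum (map fst (take k (ep r @ y))) = c
       then seg (drop k (ep r @ y)) v' else 0)" by (simp add: seg.simps)
  also have "\<dots> = (\<Sum>k\<in>{1..r}. if (\<forall>l<k-1. \<not> snd ((ep r @ y)!l)) \<and> tsum (map fst (take k (ep r @ y))) = c
       then seg (drop k (ep r @ y)) v' else 0) + (\<Sum>k\<in>{1..length y}. if (\<forall>l<r+k-1. \<not> snd ((ep r @ y)!l)) \<and> tsum (map fst (take (r+k) (ep r @ y))) = c
       then seg (drop (r+k) (ep r @ y)) v' else 0)" by (rule sum_split_shift)
  also have "(\<Sum>k\<in>{1..r}. if (\<forall>l<k-1. \<not> snd ((ep r @ y)!l)) \<and> tsum (map fst (take k (ep r @ y))) = c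
       then seg (drop k (ep r @ y)) v' else 0) = 0"
    using c by (intro sum.neutral) (auto simp: tsum_rep_Eps)
  also have "(\<Sum>k\<in>{1..length y}. if (\<forall>l<r+k-1. \<not> snd ((ep r @ y)!l)) \<and> tsum (map fst (take (r+k) (ep r @ y))) = c
       then seg (drop (r+k) (ep r @ y)) v' else 0) =
     (\<Sum>k\<in>{1..length y}. if (\<forall>l<k-1. \<not> snd (y!l)) \<and> tsum (map fst (take k y)) = c
       then seg (drop k y) v' else 0)"
  proof (intro sum.cong refl)
    fix k assume k: "k \<in> {1..length y}"
    have f: "(\<forall>l<r+k-1. \<not> snd ((ep r @ y)!l)) \<longleftrightarrow> (\<forall>l<k-1. \<not> snd (y!l))"
    proof
      assume H: "\<forall>l<r+k-1. \<not> snd ((ep r @ y)!l)"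
      show "\<forall>l<k-1. \<not> snd (y!l)"
      proof (intro allI impI)
        fix l assume "l < k - 1"
        then show "\<not> snd (y!l)" using H[rule_format, of "r+l"] k by (auto simp: nth_append)
      qed
    next
      assume H: "\<forall>l<k-1. \<not> snd (y!l)"
      show "\<forall>l<r+k-1. \<not> snd ((ep r @ y)!l)"
      proof (intro allI impI)
        fix l assume "l < r + k - 1"
        then show "\<not> snd ((ep r @ y)!l)" using H[rule_format, of "l - r"] k by (auto simp: nth_append)
      qed
    qed
    have t: "tsum (map fst (take (r+k) (ep r @ y))) = tsum (map fst (take k y))"
      using k tk[of k] by (simp add: tsum_Eps_prefix)
    have d: "drop (r+k) (ep r @ y) = drop k y" by simp
    show "(if (\<forall>l<r+k-1. \<not> snd ((ep r @ y)!l)) \<and> tsum (map fst (take (r+k) (ep r @ y))) = c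
       then seg (drop (r+k) (ep r @ y)) v' else 0) = (if (\<forall>l<k-1. \<not> snd (y!l)) \<and> tsum (map fst (take k y)) = c
       then seg (drop k y) v' else 0)" using d by (simp only: f t d)
  qed
  finally show ?thesis using Cons by (simp add: seg.simps)
qed

lemma tsum_take_ones:
  assumes "map fst y = replicate (length y) (Num 1)" "k \<le> length y"
  shows "tsum (map fst (take k y)) = Num k"
proof -
  have "map fst (take k y) = take k (map fst y)" by (simp add: take_map)
  also have "\<dots> = replicate k (Num 1)" using assms by simp
  finally show ?thesis by simp
qed

lemma seg_ep_choose:
  assumes y: "y \<noteq> []" "map fst y = replicate (length y) (Num 1)"
    and v: "v = [] \<or> hd v \<noteq> Eps"
  shows "seg (ep j @ y) (replicate b Eps @ v) = (j choose b) * seg y v"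
proof (induction b arbitrary: j)
  case 0 then show ?case using seg_ep_shift[OF y v] by simp
next
  case (Suc b)
  let ?rest = "replicate b Eps @ v"
  have "seg (ep j @ y) (replicate (Suc b) Eps @ v) = (\<Sum>k\<in>{1..j + length y}. if (\<forall>l<k-1. \<not> snd ((ep j @ y)!l)) \<and> tsum (map fst (take k (ep j @ y))) = Eps
       then seg (drop k (ep j @ y)) ?rest else 0)" by (simp add: seg.simps)
  also have "\<dots> = (\<Sum>k\<in>{1..j}. if (\<forall>l<k-1. \<not> snd ((ep j @ y)!l)) \<and> tsum (map fst (take k (ep j @ y))) = Eps
       then seg (drop k (ep j @ y)) ?rest else 0) + (\<Sum>k\<in>{1..length y}. if (\<forall>l<j+k-1. \<not> snd ((ep j @ y)!l)) \<and> tsum (map fst (take (j+k) (ep j @ y))) = Eps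
       then seg (drop (j+k) (ep j @ y)) ?rest else 0)" by (rule sum_split_shift)
  also have "(\<Sum>k\<in>{1..length y}. if (\<forall>l<j+k-1. \<not> snd ((ep j @ y)!l)) \<and> tsum (map fst (take (j+k) (ep j @ y))) = Eps
       then seg (drop (j+k) (ep j @ y)) ?rest else 0) = 0"
  proof (intro sum.neutral ballI)
    fix k assume k: "k \<in> {1..length y}"
    have "tsum (map fst (take (j+k) (ep j @ y))) = Num k"
      using k tsum_take_ones[OF y(2), of k] by (simp add: tsum_Eps_prefix)
    then show "(if (\<forall>l<j+k-1. \<not> snd ((ep j @ y)!l)) \<and> tsum (map fst (take (j+k) (ep j @ y))) = Eps
       then seg (drop (j+k) (ep j @ y)) ?rest else 0) = 0" by simp
  qed
  also have "(\<Sum>k\<in>{1..j}. if (\<forall>l<k-1. \<not> snd ((ep j @ y)!l)) \<and> tsum (map fst (take k (ep j @ y))) = Eps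
       then seg (drop k (ep j @ y)) ?rest else 0) = (\<Sum>k\<in>{1..j}. ((j - k) choose b) * seg y v)"
  proof (intro sum.cong refl)
    fix k assume k: "k \<in> {1..j}"
    have f: "\<forall>l<k-1. \<not> snd ((ep j @ y)!l)" using k by (auto simp: nth_append)
    have t: "tsum (map fst (take k (ep j @ y))) = Eps" using k by (simp add: tsum_rep_Eps)
    have d: "drop k (ep j @ y) = ep (j - k) @ y" using k by simp
    show "(if (\<forall>l<k-1. \<not> snd ((ep j @ y)!l)) \<and> tsum (map fst (take k (ep j @ y))) = Eps
       then seg (drop k (ep j @ y)) ?rest else 0) = ((j - k) choose b) * seg y v"
      using f t d Suc.IH[of "j - k"] by simp
  qed
  also have "\<dots> = (\<Sum>r<j. r choose b) * seg y v"
  proof -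
    have "(\<Sum>k\<in>{1..j}. (j - k) choose b) = (\<Sum>r<j. r choose b)"
      using sum_rev_shift[where g="\<lambda>r. r choose b" and e=j] by simp
    then show ?thesis by (simp add: sum_distrib_right[symmetric])
  qed
  finally show ?case by (simp add: sum_choose_below)
qed

definition Teps :: "nat \<Rightarrow> nat \<Rightarrow> nat" where
  "Teps e b = (if b = 0 then (if e = 0 then 1 else 0) else if e = 0 then 0 else (e - 1) choose (b - 1))"

lemma sum_Teps: "(\<Sum>r<e. Teps r b) = Teps e (Suc b)"
proof (induction e)
  case (Suc e)
  then show ?case
    by (cases e; cases b) (auto simp: Teps_def)
qed (simp add: Teps_def)

lemma seg_ep_only: "seg (ep e) w = (if set w \<subseteq> {Eps} then Teps e (length w) else 0)"
proof (induction w arbitrary: e)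
  case Nil then show ?case by (simp add: seg.simps Teps_def)
next
  case (Cons c w)
  have "seg (ep e) (c # w) = (\<Sum>k\<in>{1..e}. if (\<forall>l<k-1. \<not> snd ((ep e)!l)) \<and> tsum (map fst (take k (ep e))) = c
       then seg (drop k (ep e)) w else 0)" by (simp add: seg.simps)
  also have "\<dots> = (\<Sum>k\<in>{1..e}. if c = Eps then seg (ep (e - k)) w else 0)"
    by (intro sum.cong refl) (auto simp: tsum_rep_Eps)
  also have "\<dots> = (if c = Eps then (\<Sum>k\<in>{1..e}. (if set w \<subseteq> {Eps} then Teps (e - k) (length w) else 0)) else 0)"
    using Cons.IH by simp
  also have "\<dots> = (if set (c#w) \<subseteq> {Eps} then Teps e (length (c # w)) else 0)"
    using sum_rev_shift[where g="\<lambda>r. Teps r (length w)" and e=e] sum_Teps[where e=e and b="length w"]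
    by auto
  finally show ?case .
qed



lemma expand_Nil[simp]: "expand [] = []" by (simp add: expand_def)
lemma expand_Cons[simp]: "expand (x # xs) = expand_entry x @ expand xs" by (simp add: expand_def)
lemma expand_append[simp]: "expand (xs @ ys) = expand xs @ expand ys" by (simp add: expand_def)
lemma expand_rep_Eps[simp]: "expand (replicate j Eps) = ep j" by (induction j) auto

abbreviation exh :: "nat list \<Rightarrow> (ntil \<times> bool) list" where "exh h \<equiv> expand (map Num h)"

definition pos :: "nat list \<Rightarrow> bool" where "pos h \<longleftrightarrow> (\<forall>x\<in>set h. 0 < x)"

lemma pos_simps[simp]: "pos [] = True" "pos (x # h) \<longleftrightarrow> 0 < x \<and> pos h"
  by (auto simp: pos_def)

lemma exh_Cons: "0 < s \<Longrightarrow> exh (s # h) = replicate (s - 1) (Num 1, False) @ (Num 1, True) # exh h"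
  by simp

lemma map_fst_exh: "pos h \<Longrightarrow> map fst (exh h) = replicate (sum_list h) (Num 1)"
proof (induction h)
  case (Cons s h)
  then obtain s' where s': "s = Suc s'" by (cases s) auto
  have "replicate s' (Num 1) @ Num 1 # replicate (sum_list h) (Num 1) = replicate (Suc s' + sum_list h) (Num 1)"
    by (simp add: replicate_add replicate_app_Cons_same)
  then show ?case using Cons s' by simp
qed simp

lemma length_exh: "pos h \<Longrightarrow> length (exh h) = sum_list h"
  using map_fst_exh[of h] by (metis length_map length_replicate)

lemma exh_ne: "h \<noteq> [] \<Longrightarrow> exh h \<noteq> []"
  by (cases h) auto

lemma last_exh: "h \<noteq> [] \<Longrightarrow> snd (last (exh h)) = True"
proof (induction h)
  case (Cons s h) then show ?case by (cases h) (auto simp: exh_ne)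
qed simp

lemma ones_exh: "pos h \<Longrightarrow> map fst (exh h) = replicate (length (exh h)) (Num 1)"
  using map_fst_exh length_exh by simp

declare expand_entry.simps[simp del] expand_Cons[simp del]

lemma seg_exh_Eps: "pos h \<Longrightarrow> seg (exh h) (Eps # v) = 0"
  unfolding seg.simps
  by (intro sum.neutral ballI) (auto simp: tsum_take_ones[OF ones_exh])

lemma seg_exh_Nil: "h \<noteq> [] \<Longrightarrow> seg (exh h) [] = 0"
  by (simp add: seg.simps exh_ne)

lemma seg_exh_Cons_Num:
  assumes "0 < s" "pos h"
  shows "seg (exh (s#h)) (Num t # v) = (if t = s then seg (exh h) v else if 0 < t \<and> t < s then seg (exh ((s-t)#h)) v else 0)"
proof -
  let ?x = "exh (s#h)"
  have p: "pos (s#h)" using assms by simp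
  have xe: "?x = replicate (s - 1) (Num 1, False) @ (Num 1, True) # exh h" using exh_Cons[OF assms(1)] .
  have L: "length ?x = s + sum_list h" using length_exh[OF p] by simp
  have fl: "snd (?x ! l) \<longleftrightarrow> l = s - 1" if "l < s" for l
    using assms that unfolding xe by (auto simp: nth_append)
  have "seg ?x (Num t # v) = (\<Sum>k\<in>{1..length ?x}. if (\<forall>l<k-1. \<not> snd (?x!l)) \<and> tsum (map fst (take k ?x)) = Num t
       then seg (drop k ?x) v else 0)" by (rule seg.simps(2))
  also have "\<dots> = (if t \<in> {1..length ?x} then (if (\<forall>l<t-1. \<not> snd (?x!l)) then seg (drop t ?x) v else 0) else 0)"
    using tsum_take_ones[OF ones_exh[OF p]]
    by (subst sum_single_nat[where kk=t]) (auto simp del: list.map)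
  also have "\<dots> = (if t = s then seg (exh h) v else if 0 < t \<and> t < s then seg (exh ((s-t)#h)) v else 0)"
  proof (cases "0 < t \<and> t \<le> s")
    case True
    then have "\<forall>l<t-1. \<not> snd (?x!l)" using fl by auto
    moreover have "t \<in> {1..length ?x}" using True L by auto
    moreover have "drop t ?x = (if t = s then exh h else exh ((s-t)#h))"
      using True assms exh_Cons[of "s-t" h] unfolding xe by (auto simp: Suc_diff_Suc simp del: list.map)
    ultimately show ?thesis using True by auto
  next
    case False
    moreover have "\<not> (\<forall>l<t-1. \<not> snd (?x!l))" if "s < t"
      using that fl[of "s-1"] assms by (intro notI) (auto dest: spec[where x="s-1"])
    ultimately show ?thesis using assms by auto
  qed
  finally show ?thesis .
qed

definition Hc :: "nat \<Rightarrow> nat list set" where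
  "Hc a = {h. h \<noteq> [] \<and> pos h \<and> sum_list h = a}"

lemma length_le_sum: "pos h \<Longrightarrow> length h \<le> sum_list h"
  by (induction h) auto

lemma finite_Hc: "finite (Hc a)"
proof (rule finite_subset)
  show "Hc a \<subseteq> {xs. set xs \<subseteq> {0..a} \<and> length xs \<le> a}"
    using length_le_sum member_le_sum_list by (fastforce simp: Hc_def)
  show "finite {xs. set xs \<subseteq> {0..a} \<and> length xs \<le> a}" by (rule finite_lists_length_le) simp
qed

lemma Hc_cons_eq: "0 < t \<Longrightarrow> t < a \<Longrightarrow> {h \<in> Hc a. hd h = t} = Cons t ` Hc (a - t)"
proof (intro equalityI subsetI)
  fix h assume "0 < t" "t < a" "h \<in> {h \<in> Hc a. hd h = t}"
  then show "h \<in> Cons t ` Hc (a - t)"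
    by (cases h) (auto simp: Hc_def intro!: image_eqI[where x="tl h"])
qed (auto simp: Hc_def)

lemma Hc_gt_eq: "0 < t \<Longrightarrow> t < a \<Longrightarrow> {h \<in> Hc a. t < hd h} = (\<lambda>g. (hd g + t) # tl g) ` Hc (a - t)"
proof (intro equalityI subsetI)
  fix h assume "0 < t" "t < a" "h \<in> {h \<in> Hc a. t < hd h}"
  then show "h \<in> (\<lambda>g. (hd g + t) # tl g) ` Hc (a - t)"
    by (cases h) (auto simp: Hc_def intro!: image_eqI[where x="(hd h - t) # tl h"])
next
  fix h assume "0 < t" "t < a" "h \<in> (\<lambda>g. (hd g + t) # tl g) ` Hc (a - t)"
  then obtain g where "g \<in> Hc (a - t)" "h = (hd g + t) # tl g" by auto
  then show "h \<in> {h \<in> Hc a. t < hd h}" using \<open>0 < t\<close> \<open>t < a\<close>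
    by (cases g) (auto simp: Hc_def)
qed

lemma Ysum:
  assumes a: "0 < a"
  shows "(\<Sum>h\<in>Hc a. (-1)^(length h + 1) * of_nat (seg (exh h) v) :: 'k::comm_ring_1) = (if v = [Num a] then 1 else 0)"
proof (cases v)
  case Nil then show ?thesis by (auto simp: seg_exh_Nil Hc_def)
next
  case (Cons c v')
  show ?thesis
  proof (cases c)
    case Eps then show ?thesis using Cons by (auto simp: seg_exh_Eps Hc_def)
  next
    case (Num t)
    have tm: "seg (exh h) (Num t # v') = (if hd h = t then seg (exh (tl h)) v' else if 0 < t \<and> t < hd h then seg (exh ((hd h - t) # tl h)) v' else 0)"
      if hH: "h \<in> Hc a" for h
    proof -
      obtain s h' where "h = s # h'" "0 < s" "pos h'" using hH by (cases h) (auto simp: Hc_def)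
      then show ?thesis using seg_exh_Cons_Num[of s h' t v'] by auto
    qed
    consider "t = a" | "t < a" "0 < t" | "t = 0 \<or> a < t" by linarith
    then show ?thesis
    proof cases
      case 1
      have "(\<Sum>h\<in>Hc a. (-1)^(length h + 1) * of_nat (seg (exh h) v) :: 'k) =
        (if [a] \<in> Hc a then (-1)^(length [a] + 1) * of_nat (seg (exh [a]) v) else 0)"
      proof (rule sum_single_nat[OF _ finite_Hc])
        fix h assume h: "h \<in> Hc a" "h \<noteq> [a]"
        then obtain s h' where sh: "h = s # h'" "0 < s" "pos h'" "s + sum_list h' = a" by (cases h) (auto simp: Hc_def)
        have "s \<noteq> a" using sh h by (cases h') (auto)
        moreover have "s \<le> a" using sh by simp
        ultimately show "(-1)^(length h + 1) * of_nat (seg (exh h) v) = (0::'k)"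
          using tm[OF h(1)] Cons Num 1 sh by auto
      qed
      also have "\<dots> = (if v = [Num a] then 1 else 0)"
        using a Cons Num 1 seg_exh_Cons_Num[of a "[]" a v'] by (auto simp: Hc_def seg_Nil_left)
      finally show ?thesis .
    next
      case 2
      define X1 where "X1 h = ((-1)^(length h + 1) * of_nat (seg (exh (tl h)) v') :: 'k)" for h
      define X2 where "X2 h = ((-1)^(length h + 1) * of_nat (seg (exh ((hd h - t) # tl h)) v') :: 'k)" for h
      have "(\<Sum>h\<in>Hc a. (-1)^(length h + 1) * of_nat (seg (exh h) v) :: 'k) =
          (\<Sum>h\<in>Hc a. (if hd h = t then X1 h else 0) + (if t < hd h then X2 h else 0))"
        using 2 by (intro sum.cong refl) (auto simp: tm Cons Num X1_def X2_def)
      also have "\<dots> = (\<Sum>h\<in>{h\<in>Hc a. hd h = t}. X1 h) + (\<Sum>h\<in>{h\<in>Hc a. t < hd h}. X2 h)"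
        by (simp add: sum.distrib sum.inter_filter[OF finite_Hc])
      also have "(\<Sum>h\<in>{h\<in>Hc a. hd h = t}. X1 h) = (\<Sum>g\<in>Hc (a - t). X1 (t # g))"
        using 2 by (simp add: Hc_cons_eq sum.reindex)
      also have "(\<Sum>h\<in>{h\<in>Hc a. t < hd h}. X2 h) = (\<Sum>g\<in>Hc (a - t). X2 ((hd g + t) # tl g))"
      proof -
        have "inj_on (\<lambda>g. (hd g + t) # tl g) (Hc (a - t))"
        proof (rule inj_onI)
          fix g1 g2 assume "g1 \<in> Hc (a - t)" "g2 \<in> Hc (a - t)" "(hd g1 + t) # tl g1 = (hd g2 + t) # tl g2"
          then show "g1 = g2" by (cases g1; cases g2) (auto simp: Hc_def)
        qed
        then show ?thesis using 2 by (simp add: Hc_gt_eq sum.reindex)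
      qed
      also have "(\<Sum>g\<in>Hc (a - t). X1 (t # g)) + (\<Sum>g\<in>Hc (a - t). X2 ((hd g + t) # tl g)) = 0"
      proof -
        have "X1 (t # g) + X2 ((hd g + t) # tl g) = 0" if gH: "g \<in> Hc (a - t)" for g
        proof -
          obtain x g' where "g = x # g'" using gH by (cases g) (auto simp: Hc_def)
          then show ?thesis by (simp add: X1_def X2_def)
        qed
        then show ?thesis by (simp add: sum.distrib[symmetric])
      qed
      finally show ?thesis using 2 Cons Num by auto
    next
      case 3
      have "(\<Sum>h\<in>Hc a. (-1)^(length h + 1) * of_nat (seg (exh h) v) :: 'k) = 0"
      proof (intro sum.neutral ballI)
        fix h assume h: "h \<in> Hc a"
        then have "hd h \<le> a" "0 < hd h" by (cases h; auto simp: Hc_def)+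
        then show "(-1)^(length h + 1) * of_nat (seg (exh h) v) = (0::'k)"
          using tm[OF h] 3 Cons Num by auto
      qed
      then show ?thesis using 3 Cons Num a by auto
    qed
  qed
qed



lemma sum_split_atMost: "(\<Sum>j\<le>b+(n::nat). g j) = (\<Sum>j<b. g j) + (\<Sum>t\<le>n. (g (b+t) :: 'a::comm_monoid_add))"
proof (induction n)
  case 0 then show ?case by (simp add: lessThan_Suc_atMost[symmetric])
next
  case (Suc n) then show ?case by (simp add: ac_simps)
qed

lemma binom_inversion:
  "(\<Sum>j\<le>i. (-1)^(i+j) * of_nat ((i choose j) * (j choose b)) :: 'k::comm_ring_1) = (if b = i then 1 else 0)"
proof (cases "b \<le> i")
  case False
  then show ?thesis by (intro trans[OF sum.neutral]) (auto simp: binomial_eq_0)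
next
  case True
  then obtain n where n: "i = b + n" by (metis le_add_diff_inverse)
  have "(\<Sum>j\<le>i. (-1)^(i+j) * of_nat ((i choose j) * (j choose b)) :: 'k) =
     (\<Sum>j<b. (-1)^(i+j) * of_nat ((i choose j) * (j choose b))) + (\<Sum>t\<le>n. (-1)^(i+(b+t)) * of_nat ((i choose (b+t)) * ((b+t) choose b)))"
    unfolding n by (rule sum_split_atMost)
  also have "(\<Sum>j<b. (-1)^(i+j) * of_nat ((i choose j) * (j choose b)) :: 'k) = 0"
    by (intro sum.neutral) (auto simp: binomial_eq_0)
  also have "(\<Sum>t\<le>n. (-1)^(i+(b+t)) * of_nat ((i choose (b+t)) * ((b+t) choose b)) :: 'k) =
      (\<Sum>t\<le>n. (-1)^n * of_nat (i choose b) * ((-1)^t * of_nat (n choose t)))"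
  proof (intro sum.cong refl)
    fix t assume t: "t \<in> {..n}"
    have "(i choose (b+t)) * ((b+t) choose b) = (i choose b) * ((i - b) choose (b + t - b))"
      using t n by (intro choose_mult) auto
    then have c: "(i choose (b+t)) * ((b+t) choose b) = (i choose b) * (n choose t)" using n by simp
    have e: "i + (b + t) = 2 * b + (n + t)" using n by simp
    have s: "((-1::'k)^(i+(b+t))) = (-1)^n * (-1)^t" unfolding e power_add power_mult by simp
    show "(-1)^(i+(b+t)) * of_nat ((i choose (b+t)) * ((b+t) choose b)) = ((-1)^n * of_nat (i choose b) * ((-1)^t * of_nat (n choose t)) :: 'k)"
      unfolding s c by (simp add: ac_simps)
  qed
  also have "\<dots> = (-1)^n * of_nat (i choose b) * (\<Sum>t\<le>n. (-1)^t * of_nat (n choose t))"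
    by (simp add: sum_distrib_left)
  also have "\<dots> = (if b = i then 1 else 0)"
  proof (cases "n = 0")
    case True then show ?thesis using n by simp
  next
    case False then show ?thesis using n choose_alternating_sum[of n, where 'a='k] by simp
  qed
  finally show ?thesis by simp
qed

lemma split_eps: obtains b v where "w = replicate b Eps @ v" "v = [] \<or> hd v \<noteq> Eps"
proof -
  have "w = takeWhile (\<lambda>x. x = Eps) w @ dropWhile (\<lambda>x. x = Eps) w" by simp
  moreover have "takeWhile (\<lambda>x. x = Eps) w = replicate (length (takeWhile (\<lambda>x. x = Eps) w)) Eps"
    by (metis (mono_tags, lifting) replicate_length_same set_takeWhileD)
  moreover have "dropWhile (\<lambda>x. x = Eps) w = [] \<or> hd (dropWhile (\<lambda>x. x = Eps) w) \<noteq> Eps"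
    using hd_dropWhile by blast
  ultimately show ?thesis using that by metis
qed

lemma rep_eps_eq:
  assumes "replicate b Eps @ v = replicate b' Eps @ v'" "v = [] \<or> hd v \<noteq> Eps" "v' = [] \<or> hd v' \<noteq> Eps"
  shows "b = b' \<and> v = v'"
  using assms
proof (induction b arbitrary: b')
  case 0 then show ?case by (cases b') auto
next
  case (Suc b) then show ?case by (cases b') auto
qed

lemma Xsum:
  assumes a: "0 < a"
  shows "(\<Sum>j\<le>i. \<Sum>h\<in>Hc a. ((-1)^(i+j) * of_nat ((i choose j))) * ((-1)^(length h + 1) * of_nat (seg (ep j @ exh h) w1)) :: 'k::comm_ring_1)
     = (if w1 = replicate i Eps @ [Num a] then 1 else 0)"
proof -
  obtain b v where w1: "w1 = replicate b Eps @ v" and v: "v = [] \<or> hd v \<noteq> Eps" by (rule split_eps)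
  have sg: "seg (ep j @ exh h) w1 = (j choose b) * seg (exh h) v" if "h \<in> Hc a" for j h
  proof -
    have "pos h" "h \<noteq> []" using that by (auto simp: Hc_def)
    then show ?thesis unfolding w1 by (intro seg_ep_choose exh_ne ones_exh v)
  qed
  have "(\<Sum>j\<le>i. \<Sum>h\<in>Hc a. ((-1)^(i+j) * of_nat ((i choose j))) * ((-1)^(length h + 1) * of_nat (seg (ep j @ exh h) w1)) :: 'k)
     = (\<Sum>j\<le>i. \<Sum>h\<in>Hc a. ((-1)^(i+j) * of_nat ((i choose j) * (j choose b))) * ((-1)^(length h + 1) * of_nat (seg (exh h) v)))"
    by (intro sum.cong refl) (simp add: sg ac_simps)
  also have "\<dots> = (\<Sum>j\<le>i. (-1)^(i+j) * of_nat ((i choose j) * (j choose b))) * (\<Sum>h\<in>Hc a. (-1)^(length h + 1) * of_nat (seg (exh h) v))"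
    by (simp add: sum_product)
  also have "\<dots> = (if b = i then 1 else 0) * (if v = [Num a] then 1 else 0)"
    by (simp only: binom_inversion[where 'k='k and i=i and b=b] Ysum[OF a, where 'k='k and v=v])
  also have "\<dots> = (if w1 = replicate i Eps @ [Num a] then 1 else 0)"
    using rep_eps_eq[of b v i "[Num a]"] v unfolding w1 by auto
  finally show ?thesis .
qed



lemma assemble_Nil[simp]: "assemble [] e = replicate e Eps" by (simp add: assemble_def)
lemma assemble_Cons[simp]: "assemble ((i,g)#bs) e = replicate i Eps @ map Num g @ assemble bs e"
  by (simp add: assemble_def)

definition val :: "(nat \<times> nat list) list \<Rightarrow> nat \<Rightarrow> (nat \<times> nat list) list \<Rightarrow> nat \<Rightarrow> nat" where
  "val bs e cs f = (\<Prod>p < length cs. fst (cs ! p) choose fst (bs ! p)) * (if f = 0 then 1 else (f - 1) choose (e - 1))"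

lemma val_Cons: "val ((j,h)#bs) e ((i,g)#cs) f = (i choose j) * val bs e cs f"
  unfolding val_def length_Cons prod.lessThan_Suc_shift by simp

lemma val_Nil: "val [] e [] f = (if f = 0 then 1 else (f - 1) choose (e - 1))"
  by (simp add: val_def)

lemma compat_dec_Nil1: "compat_dec \<beta> \<alpha> [] e cs f \<longleftrightarrow> cs = [] \<and> \<beta> = replicate e Eps \<and> \<alpha> = replicate f Eps \<and>
   ((e = 0 \<and> f = 0) \<or> (1 \<le> e \<and> 1 \<le> f)) \<and> e \<le> f"
  by (auto simp: compat_dec_def)

lemma compat_dec_Nil2: "compat_dec \<beta> \<alpha> bs e [] f \<longleftrightarrow> bs = [] \<and> \<beta> = replicate e Eps \<and> \<alpha> = replicate f Eps \<and>
   ((e = 0 \<and> f = 0) \<or> (1 \<le> e \<and> 1 \<le> f)) \<and> e \<le> f"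
  by (auto simp: compat_dec_def)

lemma all_less_Suc_split: "(\<forall>p < Suc n. P p) \<longleftrightarrow> P 0 \<and> (\<forall>p < n. P (Suc p))"
  by (auto simp: less_Suc_eq_0_disj)

lemma compat_dec_Cons: "compat_dec \<beta> \<alpha> ((j,h)#bs) e ((i,g)#cs) f \<longleftrightarrow>
   (\<exists>\<beta>0 \<alpha>0. \<beta> = replicate j Eps @ map Num h @ \<beta>0 \<and> \<alpha> = replicate i Eps @ map Num g @ \<alpha>0 \<and> compat_dec \<beta>0 \<alpha>0 bs e cs f) \<and>
   j \<le> i \<and> h \<noteq> [] \<and> g \<noteq> [] \<and> pos h \<and> pos g \<and> comp_le h g"
  unfolding compat_dec_def by (auto simp: all_less_Suc_split pos_def)

lemma compat_dec_len: "compat_dec \<beta> \<alpha> bs e cs f \<Longrightarrow> length bs = length cs"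
  by (simp add: compat_dec_def)

lemma sum_take_mono: "k' \<le> k \<Longrightarrow> sum_list (take k' (xs::nat list)) \<le> sum_list (take k xs)"
proof (induction xs arbitrary: k k')
  case (Cons x xs) then show ?case by (cases k; cases k') auto
qed simp

lemma sum_take_pos: "pos xs \<Longrightarrow> 0 < k \<Longrightarrow> xs \<noteq> [] \<Longrightarrow> 0 < sum_list (take k xs)"
  by (cases xs; cases k) auto

lemma comp_split:
  assumes cl: "comp_le h0 (a # g')" and g': "g' \<noteq> []" and p: "pos h0" "pos (a # g')"
  shows "\<exists>h h2. h0 = h @ h2 \<and> h \<noteq> [] \<and> h2 \<noteq> [] \<and> sum_list h = a \<and> comp_le h2 g'"
proof -
  have "a \<in> cset (a # g')" unfolding cset_def using g'
    by (auto intro!: exI[where x=1])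
  then have "a \<in> cset h0" using cl by (auto simp: comp_le_def)
  then obtain k where k: "0 < k" "k < length h0" "a = sum_list (take k h0)" by (auto simp: cset_def)
  define h where "h = take k h0"
  define h2 where "h2 = drop k h0"
  have sums: "sum_list h0 = a + sum_list g'" using cl by (simp add: comp_le_def)
  have "sum_list h0 = sum_list h + sum_list h2" unfolding h_def h2_def
    by (metis append_take_drop_id sum_list_append)
  then have s2: "sum_list h2 = sum_list g'" using sums k h_def by simp
  have "cset g' \<subseteq> cset h2"
  proof
    fix x assume "x \<in> cset g'"
    then obtain i' where i': "0 < i'" "i' < length g'" "x = sum_list (take i' g')" by (auto simp: cset_def)
    have xpos: "0 < x" using i' p g' sum_take_pos[of g' i'] by simp
    have "a + x \<in> cset (a # g')" unfolding cset_def using i'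
      by (auto intro!: exI[where x="Suc i'"])
    then have "a + x \<in> cset h0" using cl by (auto simp: comp_le_def)
    then obtain k' where k': "0 < k'" "k' < length h0" "a + x = sum_list (take k' h0)" by (auto simp: cset_def)
    have "k < k'"
    proof (rule ccontr)
      assume "\<not> k < k'"
      then have "sum_list (take k' h0) \<le> sum_list (take k h0)" by (intro sum_take_mono) simp
      then show False using k k' xpos by simp
    qed
    have "take k' h0 = take k h0 @ take (k' - k) h2" unfolding h2_def using \<open>k < k'\<close>
      by (metis le_add_diff_inverse less_imp_le take_add)
    then have "x = sum_list (take (k' - k) h2)" using k k' by simp
    moreover have "0 < k' - k" "k' - k < length h2" using \<open>k < k'\<close> k' by (auto simp: h2_def)
    ultimately show "x \<in> cset h2" unfolding cset_def by blast
  qed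
  then have "comp_le h2 g'" using s2 by (simp add: comp_le_def)
  moreover have "h0 = h @ h2" "h \<noteq> []" "h2 \<noteq> []" "sum_list h = a" using k by (auto simp: h_def h2_def)
  ultimately show ?thesis by blast
qed

lemma pos_append[simp]: "pos (xs @ ys) \<longleftrightarrow> pos xs \<and> pos ys" by (auto simp: pos_def)

lemma comp_le_single: "comp_le h [a] \<longleftrightarrow> sum_list h = a"
  by (simp add: comp_le_def cset_def)


lemma split_dec:
  assumes cd: "compat_dec \<beta> (replicate i Eps @ Num a # \<alpha>') bs e cs f"
  shows "\<exists>j h \<beta>' bs' e' cs' f'. \<beta> = replicate j Eps @ map Num h @ \<beta>' \<and> j \<le> i \<and> h \<noteq> [] \<and> pos h \<and>
     sum_list h = a \<and> compat_dec \<beta>' \<alpha>' bs' e' cs' f' \<and> val bs e cs f = (i choose j) * val bs' e' cs' f'"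
proof (cases cs)
  case Nil
  then have "replicate i Eps @ Num a # \<alpha>' = replicate f Eps" using cd by (simp add: compat_dec_Nil2)
  then have "Num a \<in> set (replicate f Eps)" by (metis in_set_conv_decomp)
  then show ?thesis by (simp split: if_splits)
next
  case (Cons c cs0)
  obtain i0 g where c: "c = (i0, g)" by (cases c)
  obtain b0 bs0 where "bs = b0 # bs0" using compat_dec_len[OF cd] Cons by (cases bs) auto
  moreover obtain j h0 where "b0 = (j, h0)" by (cases b0)
  ultimately have bs: "bs = (j, h0) # bs0" by simp
  from cd[unfolded bs Cons c compat_dec_Cons] obtain \<beta>0 \<alpha>0 where
    b0: "\<beta> = replicate j Eps @ map Num h0 @ \<beta>0" and a0: "replicate i Eps @ Num a # \<alpha>' = replicate i0 Eps @ map Num g @ \<alpha>0"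
    and cd0: "compat_dec \<beta>0 \<alpha>0 bs0 e cs0 f" and jl: "j \<le> i0" and ne: "h0 \<noteq> []" "g \<noteq> []"
    and ps: "pos h0" "pos g" and cl: "comp_le h0 g" by blast
  obtain g1 g' where g: "g = g1 # g'" using ne by (cases g) auto
  from rep_eps_eq[OF a0[unfolded g list.map append_Cons[symmetric]]]
  have ii: "i0 = i" and ga: "g1 = a" and al: "\<alpha>' = map Num g' @ \<alpha>0" by auto
  have vv: "val bs e cs f = (i choose j) * val bs0 e cs0 f" using bs Cons c ii by (simp add: val_Cons)
  show ?thesis
  proof (cases "g' = []")
    case True
    then have "sum_list h0 = a" using cl g ga by (simp add: comp_le_single)
    moreover have "\<alpha>' = \<alpha>0" using al True by simp
    ultimately show ?thesis using b0 jl ii ne ps cd0 vv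
      by (intro exI[of _ j] exI[of _ h0] exI[of _ \<beta>0] exI[of _ bs0] exI[of _ e] exI[of _ cs0] exI[of _ f]) simp
  next
    case False
    obtain h h2 where hh: "h0 = h @ h2" "h \<noteq> []" "h2 \<noteq> []" "sum_list h = a" "comp_le h2 g'"
      using comp_split[of h0 a g'] cl g ga False ps by auto
    have cd': "compat_dec (map Num h2 @ \<beta>0) \<alpha>' ((0,h2)#bs0) e ((0,g')#cs0) f"
      unfolding compat_dec_Cons using cd0 al hh False ps g by auto
    have "val bs e cs f = (i choose j) * val ((0,h2)#bs0) e ((0,g')#cs0) f" using vv by (simp add: val_Cons)
    moreover have "\<beta> = replicate j Eps @ map Num h @ (map Num h2 @ \<beta>0)" using b0 hh by simp
    ultimately show ?thesis using jl ii hh ps cd'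
      by (intro exI[of _ j] exI[of _ h] exI[of _ "map Num h2 @ \<beta>0"] exI[of _ "(0,h2)#bs0"] exI[of _ e] exI[of _ "(0,g')#cs0"] exI[of _ f]) simp
  qed
qed


lemma build_dec:
  assumes "j \<le> i" "h \<noteq> []" "pos h" "sum_list h = a" "compat_dec \<beta>' \<alpha>' bs' e' cs' f'"
  shows "compat_dec (replicate j Eps @ map Num h @ \<beta>') (replicate i Eps @ Num a # \<alpha>') ((j,h)#bs') e' ((i,[a])#cs') f'
     \<and> val ((j,h)#bs') e' ((i,[a])#cs') f' = (i choose j) * val bs' e' cs' f'"
proof -
  have "0 < a" using assms(2,3,4) by (cases h) auto
  then show ?thesis unfolding compat_dec_Cons val_Cons using assms by (auto simp: comp_le_single)
qed

lemma map_Num_inj_sum: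
  assumes "map Num h @ x = map Num h2 @ y" "sum_list h = sum_list h2" "pos h" "pos h2" "h \<noteq> []" "h2 \<noteq> []"
  shows "h = h2 \<and> x = y"
  using assms
proof (induction h arbitrary: h2)
  case Nil then show ?case by simp
next
  case (Cons s t)
  then obtain t2 where h2: "h2 = s # t2" by (cases h2) auto
  show ?case
  proof (cases "t = []")
    case True
    then have "t2 = []" using Cons h2 by (cases t2) auto
    then show ?thesis using Cons True h2 by simp
  next
    case False
    then have "t2 \<noteq> []" using Cons h2 by (cases t; cases t2) auto
    then show ?thesis using Cons.IH[of t2] Cons.prems h2 False by simp
  qed
qed

lemma decomp_inj:
  assumes "replicate j Eps @ map Num h @ b = replicate j2 Eps @ map Num h2 @ b2"
    "sum_list h = sum_list h2" "pos h" "pos h2" "h \<noteq> []" "h2 \<noteq> []"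
  shows "j = j2 \<and> h = h2 \<and> b = b2"
proof -
  have "j = j2 \<and> map Num h @ b = map Num h2 @ b2"
    using assms(5,6) by (intro rep_eps_eq[OF assms(1)]) (auto simp: neq_Nil_conv)
  then show ?thesis using map_Num_inj_sum assms by blast
qed



lemma dec_allEps:
  assumes "compat_dec \<beta> \<alpha> bs e cs f" "\<forall>x\<in>set \<alpha>. x = Eps"
  shows "cs = [] \<and> bs = [] \<and> \<beta> = replicate e Eps \<and> \<alpha> = replicate f Eps"
proof (cases cs)
  case Nil then show ?thesis using assms by (simp add: compat_dec_Nil2)
next
  case (Cons c cs0)
  obtain i g where c: "c = (i,g)" by (cases c)
  have "\<alpha> = assemble cs f" "snd (cs ! 0) \<noteq> []" "length bs = length cs" using assms(1) Cons
    by (auto simp: compat_dec_def)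
  then have "Num (hd g) \<in> set \<alpha>" using Cons c by (cases g) auto
  then show ?thesis using assms(2) by auto
qed

lemma val_unique:
  "compat_dec \<beta> \<alpha> bs e cs f \<Longrightarrow> compat_dec \<beta> \<alpha> bs' e' cs' f' \<Longrightarrow> val bs e cs f = val bs' e' cs' f'"
proof (induction "length \<alpha>" arbitrary: \<alpha> \<beta> bs e cs f bs' e' cs' f' rule: less_induct)
  case less
  show ?case
  proof (cases "\<forall>x\<in>set \<alpha>. x = Eps")
    case True
    from dec_allEps[OF less.prems(1) True] dec_allEps[OF less.prems(2) True]
    have "cs = []" "bs = []" "cs' = []" "bs' = []" "e = e'" "f = f'"
      by (auto dest: arg_cong[where f=length])
    then show ?thesis by (simp add: val_Nil)
  next
    case False
    obtain i v where a: "\<alpha> = replicate i Eps @ v" and v: "v = [] \<or> hd v \<noteq> Eps" by (rule split_eps)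
    have "v \<noteq> []" using False a by auto
    then obtain x \<alpha>' where vx: "v = x # \<alpha>'" by (cases v) auto
    then obtain n where x: "x = Num n" using v by (cases x) auto
    have a2: "\<alpha> = replicate i Eps @ Num n # \<alpha>'" using a vx x by simp
    obtain j h \<beta>' bs1 e1 cs1 f1 where s1: "\<beta> = replicate j Eps @ map Num h @ \<beta>'" "j \<le> i" "h \<noteq> []" "pos h"
      "sum_list h = n" "compat_dec \<beta>' \<alpha>' bs1 e1 cs1 f1" "val bs e cs f = (i choose j) * val bs1 e1 cs1 f1"
      using split_dec[OF less.prems(1)[unfolded a2]] by blast
    obtain j2 h2 \<beta>2 bs2 e2 cs2 f2 where s2: "\<beta> = replicate j2 Eps @ map Num h2 @ \<beta>2" "j2 \<le> i" "h2 \<noteq> []" "pos h2"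
      "sum_list h2 = n" "compat_dec \<beta>2 \<alpha>' bs2 e2 cs2 f2" "val bs' e' cs' f' = (i choose j2) * val bs2 e2 cs2 f2"
      using split_dec[OF less.prems(2)[unfolded a2]] by blast
    have "j = j2 \<and> h = h2 \<and> \<beta>' = \<beta>2" using s1 s2 by (intro decomp_inj) auto
    moreover have "length \<alpha>' < length \<alpha>" using a2 by simp
    ultimately have "val bs1 e1 cs1 f1 = val bs2 e2 cs2 f2" using less.hyps s1(6) s2(6) by blast
    then show ?thesis using s1(7) s2(7) \<open>j = j2 \<and> h = h2 \<and> \<beta>' = \<beta>2\<close> by simp
  qed
qed

lemma ccoef_val:
  assumes cd: "compat_dec \<beta> \<alpha> bs e cs f"
  shows "ccoef \<alpha> \<beta> = val bs e cs f"
proof -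
  have ex: "\<exists>bs' e' cs' f'. compat_dec \<beta> \<alpha> bs' e' cs' f' \<and> val bs e cs f = val bs' e' cs' f'"
    using cd by blast
  have "(SOME v. \<exists>bs' e' cs' f'. compat_dec \<beta> \<alpha> bs' e' cs' f' \<and> v = val bs' e' cs' f') = val bs e cs f"
  proof (rule someI2_ex)
    show "\<exists>v bs' e' cs' f'. compat_dec \<beta> \<alpha> bs' e' cs' f' \<and> v = val bs' e' cs' f'" using cd by blast
  next
    fix v assume "\<exists>bs' e' cs' f'. compat_dec \<beta> \<alpha> bs' e' cs' f' \<and> v = val bs' e' cs' f'"
    then obtain bs' e' cs' f' where "compat_dec \<beta> \<alpha> bs' e' cs' f'" "v = val bs' e' cs' f'" by blast
    then show "v = val bs e cs f" using val_unique[OF cd] by simp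
  qed
  then show ?thesis unfolding ccoef_def val_def .
qed

lemma ncomp_append[simp]: "ncomp (xs @ ys) \<longleftrightarrow> ncomp xs \<and> ncomp ys" by (auto simp: ncomp_def)
lemma ncomp_rep_Eps[simp]: "ncomp (replicate j Eps)" by (auto simp: ncomp_def)
lemma ncomp_map_Num[simp]: "ncomp (map Num h) \<longleftrightarrow> pos h" by (auto simp: ncomp_def pos_def)
lemma ncomp_Cons[simp]: "ncomp (x # xs) \<longleftrightarrow> x \<noteq> Num 0 \<and> ncomp xs" by (auto simp: ncomp_def)

definition Bset :: "ntil list \<Rightarrow> ntil list set" where "Bset \<alpha> = {\<beta>. ncomp \<beta> \<and> tprec \<beta> \<alpha>}"

lemma Bset_eps: "Bset (replicate f Eps) = (\<lambda>e. replicate e Eps) ` {e. e \<le> f \<and> (e = 0 \<longleftrightarrow> f = 0)}"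
proof (intro equalityI subsetI)
  fix \<beta> assume "\<beta> \<in> Bset (replicate f Eps)"
  then obtain bs e cs f0 where cd: "compat_dec \<beta> (replicate f Eps) bs e cs f0" by (auto simp: Bset_def tprec_def)
  from dec_allEps[OF cd] have "cs = []" "bs = []" "\<beta> = replicate e Eps" "f0 = f" by auto
  then show "\<beta> \<in> (\<lambda>e. replicate e Eps) ` {e. e \<le> f \<and> (e = 0 \<longleftrightarrow> f = 0)}"
    using cd by (auto simp: compat_dec_Nil2)
next
  fix \<beta> assume "\<beta> \<in> (\<lambda>e. replicate e Eps) ` {e. e \<le> f \<and> (e = 0 \<longleftrightarrow> f = 0)}"
  then obtain e where "\<beta> = replicate e Eps" "e \<le> f" "e = 0 \<longleftrightarrow> f = 0" by auto
  then have "compat_dec \<beta> (replicate f Eps) [] e [] f" by (auto simp: compat_dec_Nil2)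
  then show "\<beta> \<in> Bset (replicate f Eps)" using \<open>\<beta> = replicate e Eps\<close> by (auto simp: Bset_def tprec_def)
qed

lemma ccoef_eps: "e \<le> f \<Longrightarrow> (e = 0 \<longleftrightarrow> f = 0) \<Longrightarrow>
  ccoef (replicate f Eps) (replicate e Eps) = (if f = 0 then 1 else (f - 1) choose (e - 1))"
proof -
  assume "e \<le> f" "e = 0 \<longleftrightarrow> f = 0"
  then have "compat_dec (replicate e Eps) (replicate f Eps) [] e [] f" by (auto simp: compat_dec_Nil2)
  then show ?thesis by (simp add: ccoef_val val_Nil)
qed

definition bmap :: "nat \<times> nat list \<times> ntil list \<Rightarrow> ntil list" where
  "bmap = (\<lambda>(j,h,b). replicate j Eps @ map Num h @ b)"

lemma Bset_step: "Bset (replicate i Eps @ Num a # \<alpha>') = bmap ` ({..i} \<times> Hc a \<times> Bset \<alpha>')"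
proof (intro equalityI subsetI)
  fix \<beta> assume "\<beta> \<in> Bset (replicate i Eps @ Num a # \<alpha>')"
  then obtain bs e cs f where nc: "ncomp \<beta>" and cd: "compat_dec \<beta> (replicate i Eps @ Num a # \<alpha>') bs e cs f"
    by (auto simp: Bset_def tprec_def)
  obtain j h \<beta>' bs' e' cs' f' where s: "\<beta> = replicate j Eps @ map Num h @ \<beta>'" "j \<le> i" "h \<noteq> []" "pos h"
      "sum_list h = a" "compat_dec \<beta>' \<alpha>' bs' e' cs' f'"
    using split_dec[OF cd] by blast
  then have "(j, h, \<beta>') \<in> {..i} \<times> Hc a \<times> Bset \<alpha>'" using nc
    by (auto simp: Hc_def Bset_def tprec_def)
  then show "\<beta> \<in> bmap ` ({..i} \<times> Hc a \<times> Bset \<alpha>')" using s(1) by (force simp: bmap_def)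
next
  fix \<beta> assume "\<beta> \<in> bmap ` ({..i} \<times> Hc a \<times> Bset \<alpha>')"
  then obtain j h \<beta>' where b: "\<beta> = replicate j Eps @ map Num h @ \<beta>'" "j \<le> i" "h \<in> Hc a" "\<beta>' \<in> Bset \<alpha>'"
    by (auto simp: bmap_def)
  then obtain bs' e' cs' f' where "compat_dec \<beta>' \<alpha>' bs' e' cs' f'" "ncomp \<beta>'" by (auto simp: Bset_def tprec_def)
  then have "compat_dec \<beta> (replicate i Eps @ Num a # \<alpha>') ((j,h)#bs') e' ((i,[a])#cs') f'"
    using build_dec[of j i h a] b by (auto simp: Hc_def)
  then show "\<beta> \<in> Bset (replicate i Eps @ Num a # \<alpha>')" using b \<open>ncomp \<beta>'\<close>
    by (auto simp: Bset_def tprec_def Hc_def)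
qed

lemma bmap_inj: "inj_on bmap ({..i} \<times> Hc a \<times> B)"
proof (rule inj_onI)
  fix x y assume x: "x \<in> {..i} \<times> Hc a \<times> B" and y: "y \<in> {..i} \<times> Hc a \<times> B" and e: "bmap x = bmap y"
  obtain j h b where xx: "x = (j,h,b)" by (cases x) auto
  obtain j2 h2 b2 where yy: "y = (j2,h2,b2)" by (cases y) auto
  have "replicate j Eps @ map Num h @ b = replicate j2 Eps @ map Num h2 @ b2" using e xx yy by (simp add: bmap_def)
  moreover have "sum_list h = sum_list h2" "pos h" "pos h2" "h \<noteq> []" "h2 \<noteq> []" using x y xx yy by (auto simp: Hc_def)
  ultimately have "j = j2 \<and> h = h2 \<and> b = b2" by (rule decomp_inj)
  then show "x = y" using xx yy by simp
qed

lemma ccoef_step: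
  assumes "j \<le> i" "h \<in> Hc a" "\<beta>' \<in> Bset \<alpha>'"
  shows "ccoef (replicate i Eps @ Num a # \<alpha>') (replicate j Eps @ map Num h @ \<beta>') = (i choose j) * ccoef \<alpha>' \<beta>'"
proof -
  obtain bs' e' cs' f' where cd: "compat_dec \<beta>' \<alpha>' bs' e' cs' f'" using assms(3) by (auto simp: Bset_def tprec_def)
  have hh: "h \<noteq> []" "pos h" "sum_list h = a" using assms(2) by (auto simp: Hc_def)
  have c: "compat_dec (replicate j Eps @ map Num h @ \<beta>') (replicate i Eps @ Num a # \<alpha>') ((j,h)#bs') e' ((i,[a])#cs') f'
     \<and> val ((j,h)#bs') e' ((i,[a])#cs') f' = (i choose j) * val bs' e' cs' f'"
    by (rule build_dec[OF assms(1) hh cd])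
  then show ?thesis using ccoef_val[OF cd] ccoef_val[OF conjunct1[OF c]] by simp
qed



lemma seg_ep_exh_app:
  assumes "h \<noteq> []"
  shows "seg (ep j @ exh h @ ys) w = (\<Sum>u\<le>length w. seg (ep j @ exh h) (take u w) * seg ys (drop u w))"
proof -
  have "ep j @ exh h \<noteq> []" "snd (last (ep j @ exh h))" using assms exh_ne last_exh by auto
  then show ?thesis using seg_append[of "ep j @ exh h" ys w] by simp
qed

lemma final_delta:
  "(\<Sum>u\<le>length w. (if take u w = replicate i Eps @ [Num a] then 1 else 0) * (if drop u w = \<alpha>' then 1 else 0) :: 'k::comm_ring_1)
   = (if w = replicate i Eps @ Num a # \<alpha>' then 1 else 0)"
proof (cases "w = replicate i Eps @ Num a # \<alpha>'")
  case True
  have "(\<Sum>u\<le>length w. (if take u w = replicate i Eps @ [Num a] then 1 else 0) * (if drop u w = \<alpha>' then 1 else 0) :: 'k)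
     = (if Suc i \<in> {..length w} then (if take (Suc i) w = replicate i Eps @ [Num a] then 1 else 0) * (if drop (Suc i) w = \<alpha>' then 1 else 0) else 0)"
  proof (rule sum_single_nat)
    fix u assume "u \<in> {..length w}" "u \<noteq> Suc i"
    then show "(if take u w = replicate i Eps @ [Num a] then 1 else 0) * (if drop u w = \<alpha>' then 1 else 0) = (0::'k)"
      by (auto dest!: arg_cong[where f=length])
  qed simp
  then show ?thesis using True by simp
next
  case False
  have "(if take u w = replicate i Eps @ [Num a] then 1 else 0) * (if drop u w = \<alpha>' then 1 else 0) = (0::'k)" for u
  proof (cases "take u w = replicate i Eps @ [Num a] \<and> drop u w = \<alpha>'")
    case True
    then have "w = (replicate i Eps @ [Num a]) @ \<alpha>'" by (metis append_take_drop_id)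
    then show ?thesis using False by simp
  qed simp
  then show ?thesis using False by simp
qed

lemma sum_eps_case:
  assumes f: "0 < f"
  shows "(\<Sum>e\<in>{1..f}. (-1)^(e + f) * of_nat ((f - 1) choose (e - 1)) * of_nat (Teps e b) :: 'k::comm_ring_1)
     = (if b = f then 1 else 0)"
proof (cases b)
  case 0 then show ?thesis using f by (simp add: Teps_def)
next
  case (Suc b')
  obtain f' where f': "f = Suc f'" using f by (cases f) auto
  have "(\<Sum>e\<in>{1..f}. (-1)^(e + f) * of_nat ((f - 1) choose (e - 1)) * of_nat (Teps e b) :: 'k)
     = (\<Sum>j\<in>{0..f'}. (-1)^(Suc j + f) * of_nat ((f - 1) choose j) * of_nat (Teps (Suc j) b))"
    unfolding f' One_nat_def sum.shift_bounds_cl_Suc_ivl by simp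
  also have "\<dots> = (\<Sum>j\<le>f'. (-1)^(f' + j) * of_nat ((f' choose j) * (j choose b')))"
  proof (rule sum.cong)
    show "{0..f'} = {..f'}" by auto
  next
    fix x assume "x \<in> {..f'}"
    have "(-1::'k)^(Suc x + f) = (-1)^(f' + x)" using f' by (simp add: add.commute)
    then show "(-1)^(Suc x + f) * of_nat ((f - 1) choose x) * of_nat (Teps (Suc x) b) = ((-1)^(f' + x) * of_nat ((f' choose x) * (x choose b')) :: 'k)"
      using \<open>(-1::'k)^(Suc x + f) = (-1)^(f' + x)\<close> by (simp add: Teps_def Suc f' mult.assoc)
  qed
  also have "\<dots> = (if b = f then 1 else 0)" using binom_inversion[where 'k='k, of f' b'] Suc f' by simp
  finally show ?thesis .
qed

lemma main_comb:
  "ncomp \<alpha> \<Longrightarrow> (\<Sum>\<beta>\<in>Bset \<alpha>. (-1)^(length \<beta> + length \<alpha>) * of_nat (ccoef \<alpha> \<beta>) * of_nat (seg (expand \<beta>) w) :: 'k::comm_ring_1)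
    = (if w = \<alpha> then 1 else 0)"
proof (induction "length \<alpha>" arbitrary: \<alpha> w rule: less_induct)
  case less
  show ?case
  proof (cases "\<forall>x\<in>set \<alpha>. x = Eps")
    case True
    define f where "f = length \<alpha>"
    have af: "\<alpha> = replicate f Eps" using True unfolding f_def by (simp add: replicate_length_same)
    have inj: "inj_on (\<lambda>e. replicate e Eps) {e. e \<le> f \<and> (e = 0 \<longleftrightarrow> f = 0)}"
      by (rule inj_onI) (auto dest: arg_cong[where f=length])
    have "(\<Sum>\<beta>\<in>Bset \<alpha>. (-1)^(length \<beta> + length \<alpha>) * of_nat (ccoef \<alpha> \<beta>) * of_nat (seg (expand \<beta>) w) :: 'k)
      = (\<Sum>e\<in>{e. e \<le> f \<and> (e = 0 \<longleftrightarrow> f = 0)}. (-1)^(e + f) * of_nat (if f = 0 then 1 else (f - 1) choose (e - 1)) * of_nat (seg (ep e) w))"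
      unfolding af Bset_eps by (simp add: sum.reindex[OF inj] ccoef_eps)
    also have "\<dots> = (if w = \<alpha> then 1 else 0)"
    proof (cases "f = 0")
      case True
      then have "{e. e \<le> f \<and> (e = 0 \<longleftrightarrow> f = 0)} = {0}" by auto
      then show ?thesis using True af by (simp add: seg_Nil_left)
    next
      case False
      then have E: "{e. e \<le> f \<and> (e = 0 \<longleftrightarrow> f = 0)} = {1..f}" by auto
      show ?thesis
      proof (cases "set w \<subseteq> {Eps}")
        case True
        then have w: "w = replicate (length w) Eps" by (metis empty_subsetI insert_subset replicate_length_same singletonD subsetD)
        have "(\<Sum>e\<in>{1..f}. (-1)^(e + f) * of_nat (if f = 0 then 1 else (f - 1) choose (e - 1)) * of_nat (seg (ep e) w) :: 'k)
          = (\<Sum>e\<in>{1..f}. (-1)^(e + f) * of_nat ((f - 1) choose (e - 1)) * of_nat (Teps e (length w)))"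
          using True False by (intro sum.cong) (auto simp: seg_ep_only)
        also have "\<dots> = (if length w = f then 1 else 0)" using sum_eps_case[where 'k='k and f=f and b="length w"] False by simp
        finally show ?thesis using E af w by (auto dest: arg_cong[where f=length])
      next
        case nt: False
        then have "w \<noteq> \<alpha>" using af by auto
        then show ?thesis using E nt by (simp add: seg_ep_only)
      qed
    qed
    finally show ?thesis .
  next
    case False
    obtain i v where a: "\<alpha> = replicate i Eps @ v" and v: "v = [] \<or> hd v \<noteq> Eps" by (rule split_eps)
    have "v \<noteq> []" using False a by auto
    then obtain x \<alpha>' where vx: "v = x # \<alpha>'" by (cases v) auto
    then obtain a0 where x: "x = Num a0" using v by (cases x) auto
    have a2: "\<alpha> = replicate i Eps @ Num a0 # \<alpha>'" using a vx x by simp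
    have a0: "0 < a0" and nc': "ncomp \<alpha>'" using less.prems a2 by auto
    have IH: "(\<Sum>\<beta>'\<in>Bset \<alpha>'. (-1)^(length \<beta>' + length \<alpha>') * of_nat (ccoef \<alpha>' \<beta>') * of_nat (seg (expand \<beta>') w') :: 'k)
        = (if w' = \<alpha>' then 1 else 0)" for w'
      using less.hyps[of \<alpha>' w'] a2 nc' by simp
    define A where "A j h u = ((-1)^(i+j) * of_nat (i choose j)) * ((-1)^(length h + 1) * of_nat (seg (ep j @ exh h) (take u w)) :: 'k)" for j h u
    define B where "B \<beta>' u = ((-1)^(length \<beta>' + length \<alpha>') * of_nat (ccoef \<alpha>' \<beta>') * of_nat (seg (expand \<beta>') (drop u w)) :: 'k)" for \<beta>' u
    define T where "T \<beta> = ((-1)^(length \<beta> + length \<alpha>) * of_nat (ccoef \<alpha> \<beta>) * of_nat (seg (expand \<beta>) w) :: 'k)" for \<beta>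
    have Tb: "T (bmap (j,h,\<beta>')) = (\<Sum>u\<le>length w. A j h u * B \<beta>' u)" if "j \<le> i" "h \<in> Hc a0" "\<beta>' \<in> Bset \<alpha>'" for j h \<beta>'
    proof -
      have hne: "h \<noteq> []" using that by (auto simp: Hc_def)
      have cc: "ccoef \<alpha> (bmap (j,h,\<beta>')) = (i choose j) * ccoef \<alpha>' \<beta>'"
        using ccoef_step[OF that] a2 by (simp add: bmap_def)
      have sg: "seg (expand (bmap (j,h,\<beta>'))) w = (\<Sum>u\<le>length w. seg (ep j @ exh h) (take u w) * seg (expand \<beta>') (drop u w))"
        using seg_ep_exh_app[OF hne] by (simp add: bmap_def)
      have sgn: "((-1::'k)^(length (bmap (j,h,\<beta>')) + length \<alpha>)) = ((-1)^(i+j)) * ((-1)^(length h + 1)) * (-1)^(length \<beta>' + length \<alpha>')"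
      proof -
        have "length (bmap (j,h,\<beta>')) + length \<alpha> = (i + j) + (length h + 1) + (length \<beta>' + length \<alpha>')"
          using a2 by (simp add: bmap_def)
        then show ?thesis by (simp only: power_add)
      qed
      show ?thesis unfolding T_def cc sg sgn A_def B_def of_nat_sum of_nat_mult sum_distrib_left
        by (intro sum.cong refl) (simp add: ac_simps)
    qed
    have "(\<Sum>\<beta>\<in>Bset \<alpha>. T \<beta>) = (\<Sum>x\<in>{..i} \<times> Hc a0 \<times> Bset \<alpha>'. T (bmap x))"
      unfolding a2 Bset_step by (simp add: sum.reindex[OF bmap_inj])
    also have "\<dots> = (\<Sum>j\<le>i. \<Sum>h\<in>Hc a0. \<Sum>\<beta>'\<in>Bset \<alpha>'. T (bmap (j,h,\<beta>')))"
      by (simp add: sum.cartesian_product)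
    also have "\<dots> = (\<Sum>j\<le>i. \<Sum>h\<in>Hc a0. \<Sum>\<beta>'\<in>Bset \<alpha>'. \<Sum>u\<le>length w. A j h u * B \<beta>' u)"
      by (intro sum.cong refl) (simp add: Tb)
    also have "\<dots> = (\<Sum>j\<le>i. \<Sum>h\<in>Hc a0. \<Sum>u\<le>length w. A j h u * (\<Sum>\<beta>'\<in>Bset \<alpha>'. B \<beta>' u))"
      by (intro sum.cong refl) (simp add: sum.swap[where A="Bset \<alpha>'"] sum_distrib_left)
    also have "\<dots> = (\<Sum>j\<le>i. \<Sum>u\<le>length w. \<Sum>h\<in>Hc a0. A j h u * (\<Sum>\<beta>'\<in>Bset \<alpha>'. B \<beta>' u))"
      by (intro sum.cong refl) (rule sum.swap)
    also have "\<dots> = (\<Sum>u\<le>length w. \<Sum>j\<le>i. \<Sum>h\<in>Hc a0. A j h u * (\<Sum>\<beta>'\<in>Bset \<alpha>'. B \<beta>' u))"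
      by (rule sum.swap)
    also have "\<dots> = (\<Sum>u\<le>length w. (\<Sum>j\<le>i. \<Sum>h\<in>Hc a0. A j h u) * (\<Sum>\<beta>'\<in>Bset \<alpha>'. B \<beta>' u))"
      by (simp add: sum_distrib_right)
    also have "\<dots> = (\<Sum>u\<le>length w. (if take u w = replicate i Eps @ [Num a0] then 1 else 0) * (if drop u w = \<alpha>' then 1 else 0))"
      unfolding A_def B_def by (simp only: Xsum[OF a0] IH)
    also have "\<dots> = (if w = \<alpha> then 1 else 0)" unfolding a2 by (rule final_delta)
    finally show ?thesis unfolding T_def .
  qed
qed



definition supp :: "(nat \<Rightarrow> ntil) \<Rightarrow> nat set" where "supp m = {i. m i \<noteq> Num 0}"
definition word :: "(nat \<Rightarrow> ntil) \<Rightarrow> ntil list" where "word m = map m (sorted_list_of_set (supp m))"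

lemma mono_of_Nil[simp]: "mono_of [] = (\<lambda>_. Num 0)" by (simp add: mono_of_def)
lemma mono_of_Cons[simp]: "mono_of ((n,e)#ps) = (mono_of ps)(n := tadd (mono_of ps n) e)"
  by (simp add: mono_of_def)

lemma mono_of_notin: "v \<notin> set n \<Longrightarrow> mono_of (zip n es) v = Num 0"
proof (induction n arbitrary: es)
  case (Cons x n) then show ?case by (cases es) auto
qed simp

lemma supp_mono: "length n = length es \<Longrightarrow> \<forall>e\<in>set es. e \<noteq> Num 0 \<Longrightarrow> supp (mono_of (zip n es)) = set n"
proof (induction n arbitrary: es)
  case Nil then show ?case by (simp add: supp_def)
next
  case (Cons x n)
  then obtain e es' where es: "es = e # es'" by (cases es) auto
  then have "supp (mono_of (zip n es')) = set n" using Cons by simp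
  then show ?case using es Cons.prems by (auto simp: supp_def)
qed

lemma mono_rep:
  assumes "k \<le> length es" "v \<notin> set n'"
  shows "mono_of (zip (replicate k v @ n') es) = (mono_of (zip n' (drop k es)))(v := tsum (take k es))"
  using assms(1)
proof (induction k arbitrary: es)
  case 0
  then show ?case using mono_of_notin[OF assms(2)] by (auto simp: fun_eq_iff)
next
  case (Suc k)
  then obtain e es' where es: "es = e # es'" by (cases es) auto
  then show ?case using Suc by (auto simp: fun_eq_iff)
qed

lemma rep_prefix_eq:
  assumes "replicate k v @ a = replicate k' v @ b" "v \<notin> set a" "v \<notin> set b"
  shows "k = k' \<and> a = b"
  using assms
proof (induction k arbitrary: k')
  case 0 then show ?case by (cases k') auto
next
  case (Suc k) then show ?case by (cases k') auto
qed

definition Gset :: "nat \<Rightarrow> (ntil \<times> bool) list \<Rightarrow> (nat \<Rightarrow> ntil) \<Rightarrow> nat list set" where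
  "Gset lo xs m = {n. length n = length xs \<and> sorted n \<and> (\<forall>x\<in>set n. lo \<le> x) \<and>
     (\<forall>l. Suc l < length n \<and> snd (xs!l) \<longrightarrow> n!l < n!Suc l) \<and> mono_of (zip n (map fst xs)) = m}"

definition NZ :: "(ntil \<times> bool) list \<Rightarrow> bool" where "NZ xs \<longleftrightarrow> (\<forall>p\<in>set xs. fst p \<noteq> Num 0)"

lemma NZ_drop: "NZ xs \<Longrightarrow> NZ (drop k xs)" by (auto simp: NZ_def dest: in_set_dropD)

lemma Gset_supp: "n \<in> Gset lo xs m \<Longrightarrow> NZ xs \<Longrightarrow> supp m = set n"
proof -
  assume n: "n \<in> Gset lo xs m" and nz: "NZ xs"
  have "length n = length (map fst xs)" "\<forall>e\<in>set (map fst xs). e \<noteq> Num 0" "m = mono_of (zip n (map fst xs))"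
    using n nz by (auto simp: Gset_def NZ_def)
  then show ?thesis using supp_mono by metis
qed

lemma finite_Gset: "NZ xs \<Longrightarrow> finite (Gset lo xs m)"
proof (cases "finite (supp m)")
  case True
  assume nz: "NZ xs"
  have "Gset lo xs m \<subseteq> {n. set n \<subseteq> supp m \<and> length n = length xs}"
    using Gset_supp[OF _ nz] by (auto simp: Gset_def)
  then show ?thesis using finite_lists_length_eq[OF True] by (rule finite_subset)
next
  case False
  assume nz: "NZ xs"
  then have "Gset lo xs m = {}" using Gset_supp[OF _ nz] False by (metis List.finite_set equals0I)
  then show ?thesis by simp
qed

lemma Gset_step:
  assumes nz: "NZ xs" and fin: "finite (supp m)" and sub: "supp m \<subseteq> {lo..}" and ne: "supp m \<noteq> {}"
    and v: "v = Min (supp m)" and m': "m' = m(v := Num 0)"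
  shows "Gset lo xs m = (\<Union>k\<in>{k\<in>{1..length xs}. (\<forall>l<k-1. \<not> snd (xs!l)) \<and> tsum (map fst (take k xs)) = m v}.
      (\<lambda>n'. replicate k v @ n') ` Gset (Suc v) (drop k xs) m')"
proof (intro equalityI subsetI)
  fix n assume n: "n \<in> Gset lo xs m"
  have sn: "supp m = set n" using Gset_supp[OF n nz] .
  have vin: "v \<in> set n" using v sn fin ne Min_in by auto
  have vmin: "\<forall>y\<in>set n. v \<le> y" using v sn fin by auto
  from n have len: "length n = length xs" and srt: "sorted n" and lo: "\<forall>x\<in>set n. lo \<le> x"
    and fl: "\<forall>l. Suc l < length n \<and> snd (xs!l) \<longrightarrow> n!l < n!Suc l" and mo: "mono_of (zip n (map fst xs)) = m"
    by (auto simp: Gset_def)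
  define k where "k = length (takeWhile (\<lambda>x. x = v) n)"
  define n' where "n' = dropWhile (\<lambda>x. x = v) n"
  have tw: "takeWhile (\<lambda>x. x = v) n = replicate k v"
    unfolding k_def by (rule replicate_length_same[symmetric]) (auto dest: set_takeWhileD)
  have "n = takeWhile (\<lambda>x. x = v) n @ dropWhile (\<lambda>x. x = v) n" by simp
  then have nn: "n = replicate k v @ n'" unfolding n'_def tw .
  have srt': "sorted n'" using srt nn by (simp add: sorted_append)
  have gt: "\<forall>y\<in>set n'. v < y"
  proof
    fix y assume y: "y \<in> set n'"
    then have "n' \<noteq> []" by auto
    then have "hd n' \<noteq> v" unfolding n'_def using hd_dropWhile[of "\<lambda>x. x = v" n] by simp
    moreover have "hd n' \<in> set n" using \<open>n' \<noteq> []\<close> nn by simp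
    ultimately have "v < hd n'" using vmin by force
    moreover have "hd n' \<le> y" using srt' y \<open>n' \<noteq> []\<close> by (cases n') auto
    ultimately show "v < y" by simp
  qed
  then have vn': "v \<notin> set n'" by auto
  have k1: "1 \<le> k" using vin vn' nn by (cases k) auto
  have kl: "k \<le> length xs" using len nn by simp
  have mr: "m = (mono_of (zip n' (drop k (map fst xs))))(v := tsum (take k (map fst xs)))"
    using mo mono_rep[of k "map fst xs" v n'] kl vn' nn by simp
  have mv: "m v = tsum (map fst (take k xs))" using mr by (simp add: take_map)
  have mm': "m' = mono_of (zip n' (map fst (drop k xs)))"
    using mr m' mono_of_notin[OF vn'] by (auto simp: fun_eq_iff drop_map)
  have C: "\<forall>l<k-1. \<not> snd (xs!l)"
  proof (intro allI impI)
    fix l assume l: "l < k - 1"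
    have "n!l = v" "n!Suc l = v" using l nn by (auto simp: nth_append)
    moreover have "Suc l < length n" using l nn by simp
    ultimately show "\<not> snd (xs!l)" using fl by auto
  qed
  have "n' \<in> Gset (Suc v) (drop k xs) m'"
    unfolding Gset_def
  proof (intro CollectI conjI)
    show "length n' = length (drop k xs)" using len nn by simp
    show "sorted n'" by (rule srt')
    show "\<forall>x\<in>set n'. Suc v \<le> x" using gt by auto
    show "\<forall>l. Suc l < length n' \<and> snd (drop k xs ! l) \<longrightarrow> n'!l < n'!Suc l"
    proof (intro allI impI)
      fix l assume l: "Suc l < length n' \<and> snd (drop k xs ! l)"
      then have "Suc (k + l) < length n" "snd (xs ! (k + l))" using nn kl by auto
      then have "n!(k+l) < n!Suc (k+l)" using fl by blast
      then show "n'!l < n'!Suc l" using nn by (simp add: nth_append)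
    qed
    show "mono_of (zip n' (map fst (drop k xs))) = m'" using mm' by simp
  qed
  then show "n \<in> (\<Union>k\<in>{k\<in>{1..length xs}. (\<forall>l<k-1. \<not> snd (xs!l)) \<and> tsum (map fst (take k xs)) = m v}.
      (\<lambda>n'. replicate k v @ n') ` Gset (Suc v) (drop k xs) m')"
    using k1 kl C mv nn by auto
next
  fix n assume "n \<in> (\<Union>k\<in>{k\<in>{1..length xs}. (\<forall>l<k-1. \<not> snd (xs!l)) \<and> tsum (map fst (take k xs)) = m v}.
      (\<lambda>n'. replicate k v @ n') ` Gset (Suc v) (drop k xs) m')"
  then obtain k n' where k: "1 \<le> k" "k \<le> length xs" and C: "\<forall>l<k-1. \<not> snd (xs!l)"
    and mv: "tsum (map fst (take k xs)) = m v" and n'G: "n' \<in> Gset (Suc v) (drop k xs) m'" and nn: "n = replicate k v @ n'"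
    by auto
  from n'G have len': "length n' = length xs - k" and srt': "sorted n'" and ge: "\<forall>x\<in>set n'. Suc v \<le> x"
    and fl': "\<forall>l. Suc l < length n' \<and> snd (drop k xs ! l) \<longrightarrow> n'!l < n'!Suc l"
    and mo': "mono_of (zip n' (map fst (drop k xs))) = m'"
    by (auto simp: Gset_def)
  have vsupp: "v \<in> supp m" using v fin ne Min_in by auto
  then have lov: "lo \<le> v" using sub by auto
  have vn': "v \<notin> set n'" using ge by auto
  show "n \<in> Gset lo xs m"
    unfolding Gset_def
  proof (intro CollectI conjI)
    show "length n = length xs" using nn len' k by simp
    show "sorted n" using nn srt' ge by (auto simp: sorted_append)
    show "\<forall>x\<in>set n. lo \<le> x" using nn ge lov by auto
    show "\<forall>l. Suc l < length n \<and> snd (xs!l) \<longrightarrow> n!l < n!Suc l"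
    proof (intro allI impI)
      fix l assume l: "Suc l < length n \<and> snd (xs!l)"
      consider "l < k - 1" | "l = k - 1" | "k \<le> l" by linarith
      then show "n!l < n!Suc l"
      proof cases
        case 1 then show ?thesis using C l by auto
      next
        case 2
        then have "n!l = v" using nn k by (simp add: nth_append)
        moreover have "n!Suc l = n'!0" using nn k 2 by (simp add: nth_append)
        moreover have "n' \<noteq> []" using l nn 2 k by auto
        ultimately show ?thesis using ge by (cases n') auto
      next
        case 3
        then obtain d where d: "l = k + d" by (metis le_add_diff_inverse)
        have "Suc d < length n'" "snd (drop k xs ! d)" using l nn d k by auto
        then have "n'!d < n'!Suc d" using fl' by blast
        then show ?thesis using nn d by (simp add: nth_append)
      qed
    qed
    have "mono_of (zip n (map fst xs)) = (mono_of (zip n' (drop k (map fst xs))))(v := tsum (take k (map fst xs)))"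
      using mono_rep[of k "map fst xs" v n'] k vn' nn by simp
    also have "\<dots> = m'(v := m v)" using mo' mv by (simp add: drop_map take_map)
    also have "\<dots> = m" using m' by simp
    finally show "mono_of (zip n (map fst xs)) = m" .
  qed
qed

lemma card_Gset_step:
  assumes nz: "NZ xs" and fin: "finite (supp m)" and sub: "supp m \<subseteq> {lo..}" and ne: "supp m \<noteq> {}"
    and v: "v = Min (supp m)" and m': "m' = m(v := Num 0)"
  shows "card (Gset lo xs m) = (\<Sum>k\<in>{1..length xs}. if (\<forall>l<k-1. \<not> snd (xs!l)) \<and> tsum (map fst (take k xs)) = m v
      then card (Gset (Suc v) (drop k xs) m') else 0)"
proof -
  let ?K = "{k\<in>{1..length xs}. (\<forall>l<k-1. \<not> snd (xs!l)) \<and> tsum (map fst (take k xs)) = m v}"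
  let ?A = "\<lambda>k. (\<lambda>n'. replicate k v @ n') ` Gset (Suc v) (drop k xs) m'"
  have "card (Gset lo xs m) = card (\<Union>k\<in>?K. ?A k)" using Gset_step[OF assms] by simp
  also have "\<dots> = (\<Sum>k\<in>?K. card (?A k))"
  proof (rule card_UN_disjoint)
    show "finite ?K" by simp
    show "\<forall>k\<in>?K. finite (?A k)" using finite_Gset[OF NZ_drop[OF nz]] by blast
    show "\<forall>i\<in>?K. \<forall>j\<in>?K. i \<noteq> j \<longrightarrow> ?A i \<inter> ?A j = {}"
    proof (intro ballI impI)
      fix i j :: nat assume "i \<noteq> j"
      show "?A i \<inter> ?A j = {}"
      proof (rule ccontr)
        assume "?A i \<inter> ?A j \<noteq> {}"
        then obtain n1 n2 where n: "n1 \<in> Gset (Suc v) (drop i xs) m'" "n2 \<in> Gset (Suc v) (drop j xs) m'"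
          "replicate i v @ n1 = replicate j v @ n2" by blast
        have "v \<notin> set n1" "v \<notin> set n2" using n(1,2) by (auto simp: Gset_def)
        then show False using rep_prefix_eq[OF n(3)] \<open>i \<noteq> j\<close> by simp
      qed
    qed
  qed
  also have "\<dots> = (\<Sum>k\<in>?K. card (Gset (Suc v) (drop k xs) m'))"
    by (intro sum.cong refl card_image) (auto simp: inj_on_def)
  also have "\<dots> = (\<Sum>k\<in>{1..length xs}. if (\<forall>l<k-1. \<not> snd (xs!l)) \<and> tsum (map fst (take k xs)) = m v
      then card (Gset (Suc v) (drop k xs) m') else 0)"
    by (rule sum.inter_filter) simp
  finally show ?thesis .
qed

lemma word_step:
  assumes fin: "finite (supp m)" and ne: "supp m \<noteq> {}" and v: "v = Min (supp m)"
  shows "word m = m v # word (m(v := Num 0))"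
proof -
  have s: "supp (m(v := Num 0)) = supp m - {v}" by (auto simp: supp_def)
  have "word m = m v # map m (sorted_list_of_set (supp m - {v}))"
    unfolding word_def using sorted_list_of_set_nonempty[OF fin ne] v by simp
  also have "map m (sorted_list_of_set (supp m - {v})) = map (m(v := Num 0)) (sorted_list_of_set (supp m - {v}))"
    using fin by (intro map_cong refl) auto
  finally show ?thesis unfolding word_def s .
qed

lemma card_Gset:
  "NZ xs \<Longrightarrow> card (Gset lo xs m) = (if finite (supp m) \<and> supp m \<subseteq> {lo..} then seg xs (word m) else 0)"
proof (induction "length xs" arbitrary: xs lo m rule: less_induct)
  case less
  show ?case
  proof (cases "finite (supp m) \<and> supp m \<subseteq> {lo..}")
    case nc: False
    have "Gset lo xs m = {}"
    proof (rule ccontr)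
      assume "Gset lo xs m \<noteq> {}"
      then obtain n where n: "n \<in> Gset lo xs m" by blast
      then have "supp m = set n" using Gset_supp less.prems by blast
      moreover have "\<forall>x\<in>set n. lo \<le> x" using n by (auto simp: Gset_def)
      ultimately show False using nc by auto
    qed
    then show ?thesis unfolding if_not_P[OF nc] by simp
  next
    case True
    then have fin: "finite (supp m)" and sub: "supp m \<subseteq> {lo..}" by auto
    show ?thesis
    proof (cases "supp m = {}")
      case True
      then have m0: "m = (\<lambda>_. Num 0)" by (auto simp: supp_def fun_eq_iff)
      have w0: "word m = []" using True by (simp add: word_def)
      show ?thesis
      proof (cases "xs = []")
        case True
        have "Gset lo xs m = {[]}" using True m0 by (auto simp: Gset_def)
        then show ?thesis using True w0 fin sub by (simp add: seg.simps)
      next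
        case False
        have "Gset lo xs m = {}"
        proof (rule ccontr)
          assume "Gset lo xs m \<noteq> {}"
          then obtain n where n: "n \<in> Gset lo xs m" by blast
          then have "set n = {}" using Gset_supp[OF n less.prems] \<open>supp m = {}\<close> by simp
          then show False using n False by (auto simp: Gset_def)
        qed
        then show ?thesis using False w0 fin sub by (simp add: seg.simps)
      qed
    next
      case False
      define v where "v = Min (supp m)"
      define m' where "m' = m(v := Num 0)"
      have sm': "supp m' = supp m - {v}" by (auto simp: supp_def m'_def)
      have fin': "finite (supp m')" using fin sm' by simp
      have sub': "supp m' \<subseteq> {Suc v..}"
      proof
        fix x assume "x \<in> supp m'"
        then have "x \<in> supp m" "x \<noteq> v" using sm' by auto
        then have "v \<le> x" "x \<noteq> v" using fin v_def by auto
        then show "x \<in> {Suc v..}" by simp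
      qed
      have "card (Gset lo xs m) = (\<Sum>k\<in>{1..length xs}. if (\<forall>l<k-1. \<not> snd (xs!l)) \<and> tsum (map fst (take k xs)) = m v
          then card (Gset (Suc v) (drop k xs) m') else 0)"
        by (rule card_Gset_step[OF less.prems fin sub False v_def m'_def])
      also have "\<dots> = (\<Sum>k\<in>{1..length xs}. if (\<forall>l<k-1. \<not> snd (xs!l)) \<and> tsum (map fst (take k xs)) = m v
          then seg (drop k xs) (word m') else 0)"
      proof (intro sum.cong refl)
        fix k assume k: "k \<in> {1..length xs}"
        then have "length (drop k xs) < length xs" by auto
        then have ceq: "card (Gset (Suc v) (drop k xs) m') = seg (drop k xs) (word m')"
          using less.hyps[of "drop k xs" "Suc v" m'] NZ_drop[OF less.prems] fin' sub' by simp
        then show "(if (\<forall>l<k-1. \<not> snd (xs!l)) \<and> tsum (map fst (take k xs)) = m v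
          then card (Gset (Suc v) (drop k xs) m') else 0) = (if (\<forall>l<k-1. \<not> snd (xs!l)) \<and> tsum (map fst (take k xs)) = m v
          then seg (drop k xs) (word m') else 0)" by (simp only: ceq)
      qed
      also have "\<dots> = seg xs (word m)"
        unfolding word_step[OF fin False v_def] m'_def by (simp add: seg.simps)
      finally show ?thesis using fin sub by simp
    qed
  qed
qed



lemma sorted_wrt_less_iff: "sorted_wrt (<) (t::nat list) \<longleftrightarrow> sorted t \<and> (\<forall>l. Suc l < length t \<longrightarrow> t!l < t!Suc l)"
proof -
  have tr: "transp ((<) :: nat \<Rightarrow> nat \<Rightarrow> bool)" by (auto simp: transp_def)
  show ?thesis unfolding sorted_wrt_iff_nth_Suc_transp[OF tr] sorted_iff_nth_Suc by auto
qed

lemma M_fun_card: "M_fun \<alpha> m = of_nat (card (Gset 1 (map (\<lambda>x. (x,True)) \<alpha>) m))"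
proof -
  have "{t \<in> {t :: nat list. length t = length \<alpha> \<and> sorted_wrt (<) t \<and> (\<forall>x \<in> set t. 1 \<le> x)}. mono_of (zip t \<alpha>) = m}
     = Gset 1 (map (\<lambda>x. (x,True)) \<alpha>) m"
    unfolding Gset_def sorted_wrt_less_iff by (auto simp: map_idI)
  then show ?thesis unfolding M_fun_def series_of_def by simp
qed

lemma F_fun_card: "F_fun \<beta> m = of_nat (card (Gset 1 (expand \<beta>) m))"
proof -
  have "{n \<in> {n :: nat list. length n = length (expand \<beta>) \<and> sorted n \<and> (\<forall>x \<in> set n. 1 \<le> x) \<and>
        (\<forall>l. Suc l < length n \<and> snd (expand \<beta> ! l) \<longrightarrow> n ! l < n ! Suc l)}. mono_of (zip n (map fst (expand \<beta>))) = m}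
     = Gset 1 (expand \<beta>) m"
    unfolding Gset_def by auto
  then show ?thesis unfolding F_fun_def series_of_def by simp
qed

lemma NZ_expand: "NZ (expand \<beta>)"
proof -
  have "\<forall>p\<in>set (expand_entry x). fst p \<noteq> Num 0" for x
    by (cases x) (auto simp: expand_entry.simps)
  then show ?thesis by (auto simp: NZ_def expand_def)
qed

lemma NZ_allT: "ncomp \<alpha> \<Longrightarrow> NZ (map (\<lambda>x. (x,True)) \<alpha>)"
  by (auto simp: NZ_def ncomp_def)

theorem proposition3p2:
  fixes \<alpha> :: "ntil list"
    and m :: "nat \<Rightarrow> ntil"
  assumes kQ: "(1::'k::comm_ring_1) \<noteq> 0" "\<And>n::nat. 0 < n \<Longrightarrow> \<exists>y::'k. of_nat n * y = 1"
    and \<alpha>: "ncomp \<alpha>"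
  shows "(M_fun \<alpha> m :: 'k) =
    (\<Sum>\<beta> \<in> {\<beta>. ncomp \<beta> \<and> tprec \<beta> \<alpha>}.
        (-1) ^ (length \<beta> + length \<alpha>) * of_nat (ccoef \<alpha> \<beta>) * F_fun \<beta> m)"
proof (cases "finite (supp m) \<and> supp m \<subseteq> {1..}")
  case True
  have "(M_fun \<alpha> m :: 'k) = of_nat (seg (map (\<lambda>x. (x,True)) \<alpha>) (word m))"
    using True by (simp add: M_fun_card card_Gset[OF NZ_allT[OF \<alpha>]])
  also have "\<dots> = (if word m = \<alpha> then 1 else 0)" by (simp add: seg_allT)
  also have "\<dots> = (\<Sum>\<beta>\<in>Bset \<alpha>. (-1)^(length \<beta> + length \<alpha>) * of_nat (ccoef \<alpha> \<beta>) * of_nat (seg (expand \<beta>) (word m)))"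
    by (rule main_comb[OF \<alpha>, symmetric])
  also have "\<dots> = (\<Sum>\<beta> \<in> {\<beta>. ncomp \<beta> \<and> tprec \<beta> \<alpha>}.
        (-1) ^ (length \<beta> + length \<alpha>) * of_nat (ccoef \<alpha> \<beta>) * F_fun \<beta> m)"
    unfolding Bset_def using True by (intro sum.cong refl) (simp add: F_fun_card card_Gset[OF NZ_expand])
  finally show ?thesis .
next
  case False
  have "(M_fun \<alpha> m :: 'k) = 0"
    unfolding M_fun_card card_Gset[OF NZ_allT[OF \<alpha>]] if_not_P[OF False] by simp
  moreover have "(\<Sum>\<beta> \<in> {\<beta>. ncomp \<beta> \<and> tprec \<beta> \<alpha>}.
        (-1) ^ (length \<beta> + length \<alpha>) * of_nat (ccoef \<alpha> \<beta>) * (F_fun \<beta> m :: 'k)) = 0"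
    by (intro sum.neutral ballI) (simp only: F_fun_card card_Gset[OF NZ_expand] if_not_P[OF False] of_nat_0 mult_zero_right)
  ultimately show ?thesis by simp
qed


end
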